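(* Let $A$ be a VPA. The functions $t_f:\mathrm{AllFlat}\to\mathrm{rConf}$ and $\nu_f=\mathsf{rep}\circ t_f:\mathrm{AllFlat}\to\mathrm{Rep}$ are rational.
   Context: VPA $A=(Q,\Sigma,\Gamma,\bot,q_0,\delta,F)$ over a pushdown alphabet $\Sigma=\Sigma_c\cup\Sigma_r\cup\Sigma_{\mathit{int}}$ with $\delta_c:Q\times\Sigma_c\to(\Gamma\setminus\{\bot\})\times Q$, $\delta_r:Q\times\Sigma_r\times\Gamma\to Q$, $\delta_{\mathit{int}}:Q\times\Sigma_{\mathit{int}}\to Q$; configurations $\alpha q$ with $\alpha\in\bot(\Gamma\setminus\{\bot\})^*$; a call letter $a$ with $\delta(p,a)=(\gamma,q)$ maps $\alpha p$ to $\alpha\gamma q$; internal letters change only the state; return letters pop the top $\gamma\ne\bot$ (new state $\delta(p,a,\gamma)$) or read $\bot$ without popping. $\delta(c,w)$: configuration reached from $c$ on $w$; $\mathcal L(c)$: words leading to a state in $F$. $\mathrm{rConf}$: configurations reachable from $\bot q_0$. $\mathsf{rep}(c)$: length-lexicographically least (for fixed linear orders on $\Gamma$ and $Q$) $c'\in\mathrm{rConf}$ with $\mathcal L(c')=\mathcal L(c)$; $\mathrm{Rep}=\mathsf{rep}(\mathrm{rConf})$. $\Sigma_f=\Sigma_c\cup Q\cup Q^Q$ (disjoint union); $\mathrm{AllFlat}=Q^*(\Sigma_c\cup Q^QQ^* )^*$, each element factors uniquely as $s_0s_1\cdots s_m$ with $s_0\in Q^*$, $s_i\in\Sigma_c\cup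 Q^QQ^*$. $t_f(\varepsilon)=\bot q_0$; $t_f(q_1\cdots q_n)=\bot q_1$ for $n\ge1$; if $s_m\in\Sigma_c$ then $t_f(s_0\cdots s_m)=\delta(t_f(s_0\cdots s_{m-1}),s_m)$; if $s_m=\tau q_2\cdots q_k\in Q^QQ^*$ and $t_f(s_0\cdots s_{m-1})=\alpha q$ then $t_f(s_0\cdots s_m)=\alpha\tau(q)$. A partial function between free monoids is rational if its graph is a rational subset of the product monoid (recognized by a finite transducer). *)

theory Defs
  imports Main
begin

text \<open>The pushdown alphabet is the (finite) letter type 'a, partitioned into
  call, return and internal letters by the function kind.\<close>
datatype lkind = KCall | KRet | KInt

text \<open>The transition functions are total; dc / dr / di are only
  consulted on call / return / internal letters respectively.\<close>
record ('q, 'g, 'a) vpa =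
  kind :: "'a \<Rightarrow> lkind"
  bot  :: 'g
  q0   :: 'q
  dc   :: "'q \<Rightarrow> 'a \<Rightarrow> 'g \<times> 'q"
  dr   :: "'q \<Rightarrow> 'a \<Rightarrow> 'g \<Rightarrow> 'q"
  di   :: "'q \<Rightarrow> 'a \<Rightarrow> 'q"
  fin  :: "'q set"

definition wf_vpa :: "('q, 'g, 'a) vpa \<Rightarrow> bool" where
  "wf_vpa A \<longleftrightarrow> (\<forall>p a. kind A a = KCall \<longrightarrow> fst (dc A p a) \<noteq> bot A)"

text \<open>A configuration alpha q: the stack alpha is a list written bottom-first
  (its head is bot, its last element is the top), paired with the state q.\<close>
type_synonym ('g, 'q) conf = "'g list \<times> 'q"

fun step :: "('q, 'g, 'a) vpa \<Rightarrow> ('g, 'q) conf \<Rightarrow> 'a \<Rightarrow> ('g, 'q) conf" where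
  "step A (\<alpha>, p) a =
     (case kind A a of
        KCall \<Rightarrow> (\<alpha> @ [fst (dc A p a)], snd (dc A p a))
      | KInt \<Rightarrow> (\<alpha>, di A p a)
      | KRet \<Rightarrow> (if last \<alpha> = bot A then (\<alpha>, dr A p a (bot A))
               else (butlast \<alpha>, dr A p a (last \<alpha>))))"

definition run :: "('q, 'g, 'a) vpa \<Rightarrow> ('g, 'q) conf \<Rightarrow> 'a list \<Rightarrow> ('g, 'q) conf" where
  "run A c w = foldl (step A) c w"

definition lang :: "('q, 'g, 'a) vpa \<Rightarrow> ('g, 'q) conf \<Rightarrow> 'a list set" where
  "lang A c = {w. snd (run A c w) \<in> fin A}"

definition init_conf :: "('q, 'g, 'a) vpa \<Rightarrow> ('g, 'q) conf" where
  "init_conf A = ([bot A], q0 A)"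

definition rConf :: "('q, 'g, 'a) vpa \<Rightarrow> ('g, 'q) conf set" where
  "rConf A = {run A (init_conf A) w | w. True}"

definition conf_less :: "('g::linorder, 'q::linorder) conf \<Rightarrow> ('g, 'q) conf \<Rightarrow> bool" where
  "conf_less c c' \<longleftrightarrow>
     length (fst c) < length (fst c') \<or>
     (length (fst c) = length (fst c') \<and>
        (lexordp (<) (fst c) (fst c') \<or> (fst c = fst c' \<and> snd c < snd c')))"

definition rep :: "('q::linorder, 'g::linorder, 'a) vpa \<Rightarrow> ('g, 'q) conf \<Rightarrow> ('g, 'q) conf" where
  "rep A c = (THE c'. c' \<in> rConf A \<and> lang A c' = lang A c \<and>
                 (\<forall>c''\<in>rConf A. lang A c'' = lang A c \<longrightarrow> c'' = c' \<or> conf_less c' c''))"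

text \<open>The flat alphabet Sigma_f = Sigma_c + Q + Q^Q (only FC a with a a call letter
  is a letter of Sigma_f).\<close>
datatype ('a, 'q) flat = FC 'a | FQ 'q | FT "'q \<Rightarrow> 'q"

definition is_block :: "('q, 'g, 'a) vpa \<Rightarrow> ('a, 'q) flat list \<Rightarrow> bool" where
  "is_block A s \<longleftrightarrow> (\<exists>a. kind A a = KCall \<and> s = [FC a]) \<or> (\<exists>\<tau> qs. s = FT \<tau> # map FQ qs)"

definition AllFlat :: "('q, 'g, 'a) vpa \<Rightarrow> ('a, 'q) flat list set" where
  "AllFlat A = {map FQ qs @ concat ss | qs ss. \<forall>s\<in>set ss. is_block A s}"

definition tf_init :: "('q, 'g, 'a) vpa \<Rightarrow> 'q list \<Rightarrow> ('g, 'q) conf" where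
  "tf_init A qs = (case qs of [] \<Rightarrow> init_conf A | q # _ \<Rightarrow> ([bot A], q))"

fun block_step :: "('q, 'g, 'a) vpa \<Rightarrow> ('g, 'q) conf \<Rightarrow> ('a, 'q) flat list \<Rightarrow> ('g, 'q) conf" where
  "block_step A c [FC a] = step A c a"
| "block_step A c (FT \<tau> # _) = (fst c, \<tau> (snd c))"
| "block_step A c _ = c"

text \<open>Graph of t_f : AllFlat \<rightarrow> rConf, defined along the (unique) factorisation
  s_0 s_1 ... s_m of a flat word.\<close>
definition tf_graph :: "('q, 'g, 'a) vpa \<Rightarrow> (('a, 'q) flat list \<times> ('g, 'q) conf) set" where
  "tf_graph A = {(map FQ qs @ concat ss, foldl (block_step A) (tf_init A qs) ss) | qs ss.
                   \<forall>s\<in>set ss. is_block A s}"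

definition conf_word :: "('g, 'q) conf \<Rightarrow> ('g + 'q) list" where
  "conf_word c = map Inl (fst c) @ [Inr (snd c)]"

text \<open>Graphs of t_f and nu_f = rep o t_f as relations between free monoids.\<close>
definition tf_rel :: "('q, 'g, 'a) vpa \<Rightarrow> (('a, 'q) flat list \<times> ('g + 'q) list) set" where
  "tf_rel A = {(w, conf_word c) | w c. (w, c) \<in> tf_graph A}"

definition nuf_rel :: "('q::linorder, 'g::linorder, 'a) vpa \<Rightarrow> (('a, 'q) flat list \<times> ('g + 'q) list) set" where
  "nuf_rel A = {(w, conf_word (rep A c)) | w c. (w, c) \<in> tf_graph A}"

definition rel_prod :: "('a list \<times> 'b list) set \<Rightarrow> ('a list \<times> 'b list) set \<Rightarrow> ('a list \<times> 'b list) set" where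
  "rel_prod X Y = {(u @ u', v @ v') | u v u' v'. (u, v) \<in> X \<and> (u', v') \<in> Y}"

inductive_set rel_star :: "('a list \<times> 'b list) set \<Rightarrow> ('a list \<times> 'b list) set" for X where
  rel_star_Nil: "([], []) \<in> rel_star X"
| rel_star_step: "(u, v) \<in> X \<Longrightarrow> (u', v') \<in> rel_star X \<Longrightarrow> (u @ u', v @ v') \<in> rel_star X"

inductive rational :: "('a list \<times> 'b list) set \<Rightarrow> bool" where
  rat_finite: "finite X \<Longrightarrow> rational X"
| rat_union: "rational X \<Longrightarrow> rational Y \<Longrightarrow> rational (X \<union> Y)"
| rat_prod: "rational X \<Longrightarrow> rational Y \<Longrightarrow> rational (rel_prod X Y)"
| rat_star: "rational X \<Longrightarrow> rational (rel_star X)"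

end

theory Submission
  imports Defs
begin

section \<open>Quotient-finite (regular) languages\<close>

definition quot :: "'x list set \<Rightarrow> 'x list \<Rightarrow> 'x list set" where
  "quot L u = {v. u @ v \<in> L}"

definition regular :: "'x list set \<Rightarrow> bool" where
  "regular L \<longleftrightarrow> finite (range (quot L))"

lemma quot_append: "quot (quot L u) v = quot L (u @ v)"
  by (auto simp: quot_def)

lemma quot_Nil[simp]: "quot L [] = L"
  by (auto simp: quot_def)

lemma reg_by_abs:
  assumes "finite (range f)" and "\<And>u u'. f u = f u' \<Longrightarrow> quot L u = quot L u'"
  shows "regular L"
proof -
  let ?G = "\<lambda>y. quot L (SOME u. f u = y)"
  have "range (quot L) \<subseteq> ?G ` range f"
  proof
    fix X assume "X \<in> range (quot L)"
    then obtain u where u: "X = quot L u" by auto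
    have "f (SOME u'. f u' = f u) = f u" by (rule someI) auto
    then have "quot L (SOME u'. f u' = f u) = quot L u" using assms(2) by blast
    then show "X \<in> ?G ` range f" using u by auto
  qed
  then show ?thesis unfolding regular_def using assms(1) finite_surj by blast
qed

lemma reg_by_abs':
  assumes "finite (range f)" and "\<And>u u' v. f u = f u' \<Longrightarrow> u @ v \<in> L \<Longrightarrow> u' @ v \<in> L"
  shows "regular L"
  using assms(1) by (rule reg_by_abs) (auto simp: quot_def intro: assms(2) dest: sym)

lemma finite_range_pair:
  "finite (range f) \<Longrightarrow> finite (range g) \<Longrightarrow> finite (range (\<lambda>u. (f u, g u)))"
  by (rule finite_subset[of _ "range f \<times> range g"]) auto

lemma reg_by_quot_fun:
  assumes "regular L" and "\<And>u. quot L' u = G (quot L (h u))"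
  shows "regular L'"
proof -
  have "range (quot L') \<subseteq> G ` range (quot L)" using assms(2) by auto
  then show ?thesis using assms(1) unfolding regular_def by (meson finite_imageI finite_subset)
qed

lemma reg_by_quot_fun2:
  assumes "regular L1" "regular L2" and "\<And>u. quot L' u = G (quot L1 u) (quot L2 u)"
  shows "regular L'"
proof -
  have "range (quot L') \<subseteq> (\<lambda>(X,Y). G X Y) ` (range (quot L1) \<times> range (quot L2))"
    using assms(3) by auto
  then show ?thesis using assms(1,2) unfolding regular_def by (meson finite_imageI finite_subset finite_SigmaI)
qed

lemma reg_Int: assumes "regular L1" "regular L2" shows "regular (L1 \<inter> L2)"
  by (rule reg_by_quot_fun2[OF assms, where G="(\<inter>)"]) (auto simp: quot_def)

lemma reg_Un: assumes "regular L1" "regular L2" shows "regular (L1 \<union> L2)"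
  by (rule reg_by_quot_fun2[OF assms, where G="(\<union>)"]) (auto simp: quot_def)

lemma reg_Compl: assumes "regular L" shows "regular (- L)"
  by (rule reg_by_quot_fun[OF assms, where G="uminus" and h=id]) (auto simp: quot_def)

lemma reg_Diff: "regular L1 \<Longrightarrow> regular L2 \<Longrightarrow> regular (L1 - L2)"
  using reg_Int[OF _ reg_Compl] by (simp add: Diff_eq)

lemma reg_UNIV: "regular UNIV"
  by (rule reg_by_abs[where f="\<lambda>_. ()"]) (auto simp: quot_def)

lemma reg_empty: "regular {}"
  by (rule reg_by_abs[where f="\<lambda>_. ()"]) (auto simp: quot_def)

lemma reg_rev: assumes "regular L" shows "regular (rev ` L)"
proof -
  have fin: "finite (range (quot L))" using assms by (simp add: regular_def)
  define f where "f z = {X \<in> range (quot L). rev z \<in> X}" for z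
  have "range f \<subseteq> Pow (range (quot L))" by (auto simp: f_def)
  then have "finite (range f)" using fin by (meson finite_Pow_iff finite_subset)
  then show ?thesis
  proof (rule reg_by_abs')
    fix u u' v assume fe: "f u = f u'" and "u @ v \<in> rev ` L"
    then have "rev v @ rev u \<in> L" by (auto simp: image_iff) (metis rev_append rev_rev_ident)
    then have "rev u \<in> quot L (rev v)" by (simp add: quot_def)
    then have "quot L (rev v) \<in> f u" by (simp add: f_def)
    then have "quot L (rev v) \<in> f u'" using fe by simp
    then have "rev v @ rev u' \<in> L" by (simp add: f_def quot_def)
    then show "u' @ v \<in> rev ` L" by (metis rev_append rev_rev_ident rev_image_eqI)
  qed
qed

lemma reg_hom_pre:
  assumes "regular L" shows "regular {x. concat (map g x) \<in> L}"
  by (rule reg_by_quot_fun[OF assms, where G="\<lambda>X. {v. concat (map g v) \<in> X}" and h="\<lambda>u. concat (map g u)"])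
     (auto simp: quot_def)

lemma reg_map_pre:
  assumes "regular L" shows "regular {x. map g x \<in> L}"
  using reg_hom_pre[OF assms, of "\<lambda>a. [g a]"] by simp

lemma reg_map_img:
  assumes "regular L" shows "regular (map g ` L)"
proof -
  have fin: "finite (range (quot L))" using assms by (simp add: regular_def)
  define f where "f u = {quot L u' | u'. map g u' = u}" for u
  have "range f \<subseteq> Pow (range (quot L))" by (auto simp: f_def)
  then have "finite (range f)" using fin by (meson finite_Pow_iff finite_subset)
  then show ?thesis
  proof (rule reg_by_abs')
    fix u u' v assume fe: "f u = f u'" and "u @ v \<in> map g ` L"
    then obtain x where x: "x \<in> L" "map g x = u @ v" by auto
    then obtain x1 x2 where x12: "x = x1 @ x2" "map g x1 = u" "map g x2 = v"
      by (metis map_eq_append_conv)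
    then have "quot L x1 \<in> f u" by (auto simp: f_def)
    then have "quot L x1 \<in> f u'" using fe by simp
    then obtain y1 where y1: "map g y1 = u'" "quot L y1 = quot L x1" by (auto simp: f_def)
    have "x2 \<in> quot L x1" using x x12 by (simp add: quot_def)
    then have "x2 \<in> quot L y1" using y1 by simp
    then have "y1 @ x2 \<in> L" by (simp add: quot_def)
    then show "u' @ v \<in> map g ` L" using y1 x12 by (metis map_append rev_image_eqI)
  qed
qed

lemma reg_unpad:
  assumes "regular L" shows "regular {x. \<exists>n. x @ replicate n z \<in> L}"
  by (rule reg_by_quot_fun[OF assms, where G="\<lambda>X. {v. \<exists>n. v @ replicate n z \<in> X}" and h=id])
     (auto simp: quot_def)

definition lconc :: "'x list set \<Rightarrow> 'x list set \<Rightarrow> 'x list set" (infixr "@@" 65) where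
  "L1 @@ L2 = {x @ y | x y. x \<in> L1 \<and> y \<in> L2}"

lemma reg_lconc:
  assumes "regular L1" "regular L2" shows "regular (L1 @@ L2)"
proof -
  have fin1: "finite (range (quot L1))" and fin2: "finite (range (quot L2))"
    using assms by (simp_all add: regular_def)
  define f where "f u = (quot L1 u, {quot L2 u2 | y u2. u = y @ u2 \<and> y \<in> L1})" for u
  have "range f \<subseteq> range (quot L1) \<times> Pow (range (quot L2))" by (auto simp: f_def)
  then have "finite (range f)" using fin1 fin2 by (meson finite_Pow_iff finite_SigmaI finite_subset)
  then show ?thesis
  proof (rule reg_by_abs')
    fix u u' v assume fe: "f u = f u'" and "u @ v \<in> L1 @@ L2"
    then obtain x y where xy: "u @ v = x @ y" "x \<in> L1" "y \<in> L2" by (auto simp: lconc_def)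
    then obtain m where "(u = x @ m \<and> m @ v = y) \<or> (u @ m = x \<and> v = m @ y)"
      by (auto simp: append_eq_append_conv2)
    then show "u' @ v \<in> L1 @@ L2"
    proof
      assume a: "u = x @ m \<and> m @ v = y"
      then have "quot L2 m \<in> snd (f u)" using xy by (auto simp: f_def)
      then have "quot L2 m \<in> snd (f u')" using fe by simp
      then obtain y' u2 where b: "u' = y' @ u2" "y' \<in> L1" "quot L2 u2 = quot L2 m" by (auto simp: f_def)
      have "v \<in> quot L2 m" using a xy by (simp add: quot_def)
      then have "v \<in> quot L2 u2" using b by simp
      then have "u2 @ v \<in> L2" by (simp add: quot_def)
      then show ?thesis using b by (auto simp: lconc_def)
    next
      assume a: "u @ m = x \<and> v = m @ y"
      then have "m \<in> quot L1 u" using xy by (simp add: quot_def)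
      then have "m \<in> quot L1 u'" using fe by (simp add: f_def)
      then have "u' @ m \<in> L1" by (simp add: quot_def)
      then show ?thesis using a xy unfolding lconc_def by (intro CollectI exI[of _ "u' @ m"] exI[of _ y]) auto
    qed
  qed
qed

lemma reg_lists: "regular {x. set x \<subseteq> S}"
  by (rule reg_by_abs[where f="\<lambda>u. set u \<subseteq> S"]) (auto simp: quot_def)

lemma reg_finite:
  assumes "finite L" shows "regular L"
proof -
  define P where "P = (\<Union>w\<in>L. (\<lambda>i. take i w) ` {..length w})"
  have "finite P" using assms by (simp add: P_def)
  have "range (quot L) \<subseteq> insert {} (quot L ` P)"
  proof
    fix X assume "X \<in> range (quot L)"
    then obtain u where u: "X = quot L u" by auto
    show "X \<in> insert {} (quot L ` P)"
    proof (cases "X = {}")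
      case False
      then obtain v where "u @ v \<in> L" using u by (auto simp: quot_def)
      then have "u \<in> P" unfolding P_def by (auto intro!: bexI[of _ "u @ v"] image_eqI[of _ _ "length u"])
      then show ?thesis using u by auto
    qed simp
  qed
  then show ?thesis using \<open>finite P\<close> by (simp add: regular_def finite_subset)
qed

lemma reg_dfa:
  fixes \<delta> :: "'s::finite \<Rightarrow> 'x \<Rightarrow> 's"
  shows "regular {x. foldl \<delta> s x \<in> F}"
  by (rule reg_by_abs[where f="foldl \<delta> s"]) (auto simp: quot_def)

section \<open>From quotient-finite languages to rational relations\<close>

definition hw :: "('x \<Rightarrow> 'b list \<times> 'c list) \<Rightarrow> 'x list \<Rightarrow> 'b list \<times> 'c list" where
  "hw h x = (concat (map (\<lambda>a. fst (h a)) x), concat (map (\<lambda>a. snd (h a)) x))"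

lemma hw_Nil[simp]: "hw h [] = ([], [])" by (simp add: hw_def)
lemma hw_append[simp]: "hw h (x @ y) = (fst (hw h x) @ fst (hw h y), snd (hw h x) @ snd (hw h y))"
  by (simp add: hw_def)

inductive_set lstar :: "'x list set \<Rightarrow> 'x list set" for M where
  lstar_Nil: "[] \<in> lstar M"
| lstar_step: "x \<in> M \<Longrightarrow> y \<in> lstar M \<Longrightarrow> x @ y \<in> lstar M"

lemma hw_lconc: "hw h ` (M1 @@ M2) = rel_prod (hw h ` M1) (hw h ` M2)"
proof
  show "hw h ` (M1 @@ M2) \<subseteq> rel_prod (hw h ` M1) (hw h ` M2)"
    by (auto simp: lconc_def rel_prod_def) (metis prod.collapse imageI)
next
  show "rel_prod (hw h ` M1) (hw h ` M2) \<subseteq> hw h ` (M1 @@ M2)"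
  proof
    fix p assume "p \<in> rel_prod (hw h ` M1) (hw h ` M2)"
    then obtain x y where "x \<in> M1" "y \<in> M2" "p = (fst (hw h x) @ fst (hw h y), snd (hw h x) @ snd (hw h y))"
      by (auto simp: rel_prod_def) (metis fst_conv snd_conv)
    then show "p \<in> hw h ` (M1 @@ M2)" by (auto simp: lconc_def intro!: image_eqI[of _ _ "x @ y"])
  qed
qed

lemma hw_lstar: "hw h ` lstar M = rel_star (hw h ` M)"
proof
  show "hw h ` lstar M \<subseteq> rel_star (hw h ` M)"
  proof
    fix p assume "p \<in> hw h ` lstar M"
    then obtain x where x: "x \<in> lstar M" "p = hw h x" by auto
    from x(1) have "hw h x \<in> rel_star (hw h ` M)"
    proof induct
      case lstar_Nil then show ?case by (simp add: rel_star.rel_star_Nil)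
    next
      case (lstar_step x y)
      then show ?case using rel_star.rel_star_step[of "fst (hw h x)" "snd (hw h x)" "hw h ` M" "fst (hw h y)" "snd (hw h y)"]
        by simp
    qed
    then show "p \<in> rel_star (hw h ` M)" using x by simp
  qed
next
  show "rel_star (hw h ` M) \<subseteq> hw h ` lstar M"
  proof (rule subrelI)
    fix u v assume "(u, v) \<in> rel_star (hw h ` M)"
    then show "(u, v) \<in> hw h ` lstar M"
    proof (induct rule: rel_star.induct)
      case rel_star_Nil
      then show ?case by (metis hw_Nil image_eqI lstar.lstar_Nil)
    next
      case (rel_star_step u v u' v')
      then obtain x y where "x \<in> M" "(u, v) = hw h x" "y \<in> lstar M" "(u', v') = hw h y" by auto
      then show ?case by (auto intro!: image_eqI[of _ _ "x @ y"] lstar.lstar_step) (metis fst_conv snd_conv)+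
    qed
  qed
qed

lemma rational_Union:
  assumes "finite F" "\<And>i. i \<in> F \<Longrightarrow> rational (G i)"
  shows "rational (\<Union>i\<in>F. G i)"
  using assms
proof (induct F rule: finite_induct)
  case empty then show ?case by (simp add: rational.rat_finite)
next
  case (insert x F) then show ?case by (simp add: rational.rat_union)
qed

definition paths :: "'x set \<Rightarrow> 'x list set \<Rightarrow> 'x list set set \<Rightarrow> 'x list set \<Rightarrow> 'x list set \<Rightarrow> 'x list set" where
  "paths \<Sigma> L K X Y = {x. set x \<subseteq> \<Sigma> \<and> quot X x = Y \<and> (\<forall>i. 0 < i \<and> i < length x \<longrightarrow> quot X (take i x) \<in> K)}"

lemma paths_base: "paths \<Sigma> L {} X Y = {x. x = [] \<and> X = Y} \<union> {[a] | a. a \<in> \<Sigma> \<and> quot X [a] = Y}"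
proof -
  { fix x assume "x \<in> paths \<Sigma> L {} X Y"
    have "length x < 2"
    proof (rule ccontr)
      assume "\<not> length x < 2"
      then have "0 < (1::nat)" "1 < length x" by auto
      then show False using \<open>x \<in> paths \<Sigma> L {} X Y\<close> unfolding paths_def by blast
    qed
    then have "x \<in> {x. x = [] \<and> X = Y} \<union> {[a] | a. a \<in> \<Sigma> \<and> quot X [a] = Y}"
      using \<open>x \<in> paths \<Sigma> L {} X Y\<close> unfolding paths_def
      by (cases x) (auto simp: less_2_cases_iff) }
  then show ?thesis by (auto simp: paths_def)
qed

lemma paths_mono: "K \<subseteq> K' \<Longrightarrow> paths \<Sigma> L K X Y \<subseteq> paths \<Sigma> L K' X Y"
  by (auto simp: paths_def)

lemma paths_app:
  assumes "x \<in> paths \<Sigma> L K X Z" "y \<in> paths \<Sigma> L K Z Y" "Z \<in> K"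
  shows "x @ y \<in> paths \<Sigma> L K X Y"
proof -
  have qx: "quot X x = Z" using assms(1) by (simp add: paths_def)
  have "quot X (take i (x @ y)) \<in> K" if "0 < i" "i < length (x @ y)" for i
  proof (cases "i < length x")
    case True then show ?thesis using assms(1) that by (simp add: paths_def)
  next
    case False
    then have "take i (x @ y) = x @ take (i - length x) y" by simp
    then have eq: "quot X (take i (x @ y)) = quot Z (take (i - length x) y)"
      using qx by (simp add: quot_append[symmetric])
    show ?thesis
    proof (cases "i = length x")
      case True then show ?thesis using eq assms(3) by simp
    next
      case False
      then show ?thesis using eq assms(2) that \<open>\<not> i < length x\<close> by (simp add: paths_def)
    qed
  qed
  then show ?thesis using assms by (auto simp: paths_def quot_append[symmetric])
qed

lemma paths_split:
  assumes "x \<in> paths \<Sigma> L K X Y" "0 < i" "i < length x"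
  shows "take i x \<in> paths \<Sigma> L K X (quot X (take i x))"
    and "drop i x \<in> paths \<Sigma> L K (quot X (take i x)) Y"
proof -
  show "take i x \<in> paths \<Sigma> L K X (quot X (take i x))"
    using assms by (auto simp: paths_def min_def dest: in_set_takeD)
  have "quot (quot X (take i x)) (drop i x) = Y" using assms(1) by (simp add: quot_append paths_def)
  moreover have "quot (quot X (take i x)) (take j (drop i x)) \<in> K" if "0 < j" "j < length (drop i x)" for j
  proof -
    have "take i x @ take j (drop i x) = take (i + j) x" by (simp add: take_add)
    then show ?thesis using assms that by (simp add: quot_append paths_def)
  qed
  moreover have "set (drop i x) \<subseteq> \<Sigma>" using assms(1) by (auto simp: paths_def dest: in_set_dropD)
  ultimately show "drop i x \<in> paths \<Sigma> L K (quot X (take i x)) Y" by (simp add: paths_def)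
qed

lemma paths_insert_loop:
  assumes "k \<notin> K"
  shows "z \<in> paths \<Sigma> L (insert k K) k Y \<Longrightarrow> z \<in> lstar (paths \<Sigma> L K k k) @@ paths \<Sigma> L K k Y"
proof (induct z rule: length_induct)
  case (1 z)
  show ?case
  proof (cases "\<exists>i. 0 < i \<and> i < length z \<and> quot k (take i z) = k")
    case False
    then have "z \<in> paths \<Sigma> L K k Y" using 1(2) by (auto simp: paths_def)
    moreover have "z = [] @ z" by simp
    ultimately show ?thesis unfolding lconc_def using lstar.lstar_Nil by blast
  next
    case True
    define i where "i = (LEAST i. 0 < i \<and> i < length z \<and> quot k (take i z) = k)"
    have i: "0 < i \<and> i < length z \<and> quot k (take i z) = k"
      unfolding i_def using True by (rule LeastI_ex)
    have imin: "\<And>j. 0 < j \<and> j < length z \<and> quot k (take j z) = k \<Longrightarrow> i \<le> j"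
      unfolding i_def by (rule Least_le)
    have t: "take i z \<in> paths \<Sigma> L (insert k K) k k" and d: "drop i z \<in> paths \<Sigma> L (insert k K) k Y"
      using paths_split[OF 1(2), of i] i by auto
    have "take i z \<in> paths \<Sigma> L K k k"
    proof -
      have "quot k (take j (take i z)) \<in> K" if "0 < j" "j < length (take i z)" for j
      proof -
        have ji: "j < i" using that i by simp
        have "quot k (take j z) \<in> insert k K" using 1(2) that ji i by (auto simp: paths_def)
        moreover have "quot k (take j z) \<noteq> k" using imin[of j] that ji i by auto
        ultimately show ?thesis using ji by (simp add: min_def)
      qed
      then show ?thesis using t by (auto simp: paths_def)
    qed
    moreover have "drop i z \<in> lstar (paths \<Sigma> L K k k) @@ paths \<Sigma> L K k Y"
      using 1(1) d i by auto
    ultimately show ?thesis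
      by (auto simp: lconc_def) (metis append.assoc append_take_drop_id lstar.lstar_step)
  qed
qed

lemma paths_lstar:
  "y \<in> lstar (paths \<Sigma> L K k k) \<Longrightarrow> y \<in> paths \<Sigma> L (insert k K) k k"
proof (induct rule: lstar.induct)
  case lstar_Nil then show ?case by (simp add: paths_def)
next
  case (lstar_step x y)
  have "x \<in> paths \<Sigma> L (insert k K) k k" using lstar_step(1) by (rule subsetD[OF paths_mono[OF subset_insertI]])
  then show ?case using paths_app[of x \<Sigma> L "insert k K" k k y k] lstar_step(3) by auto
qed

lemma paths_insert:
  assumes "k \<notin> K"
  shows "paths \<Sigma> L (insert k K) X Y =
    paths \<Sigma> L K X Y \<union> (paths \<Sigma> L K X k @@ (lstar (paths \<Sigma> L K k k) @@ paths \<Sigma> L K k Y))"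
proof
  show "paths \<Sigma> L (insert k K) X Y \<subseteq> paths \<Sigma> L K X Y \<union> (paths \<Sigma> L K X k @@ (lstar (paths \<Sigma> L K k k) @@ paths \<Sigma> L K k Y))"
  proof
    fix z assume z: "z \<in> paths \<Sigma> L (insert k K) X Y"
    show "z \<in> paths \<Sigma> L K X Y \<union> (paths \<Sigma> L K X k @@ (lstar (paths \<Sigma> L K k k) @@ paths \<Sigma> L K k Y))"
    proof (cases "\<exists>i. 0 < i \<and> i < length z \<and> quot X (take i z) = k")
      case False
      then have "z \<in> paths \<Sigma> L K X Y" using z by (auto simp: paths_def)
      then show ?thesis by simp
    next
      case True
      define i where "i = (LEAST i. 0 < i \<and> i < length z \<and> quot X (take i z) = k)"
      have i: "0 < i \<and> i < length z \<and> quot X (take i z) = k"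
        unfolding i_def using True by (rule LeastI_ex)
      have imin: "\<And>j. 0 < j \<and> j < length z \<and> quot X (take j z) = k \<Longrightarrow> i \<le> j"
        unfolding i_def by (rule Least_le)
      have t: "take i z \<in> paths \<Sigma> L (insert k K) X k" and d: "drop i z \<in> paths \<Sigma> L (insert k K) k Y"
        using paths_split[OF z, of i] i by auto
      have "take i z \<in> paths \<Sigma> L K X k"
      proof -
        have "quot X (take j (take i z)) \<in> K" if "0 < j" "j < length (take i z)" for j
        proof -
          have ji: "j < i" using that i by simp
          have "quot X (take j z) \<in> insert k K" using z that ji i by (auto simp: paths_def)
          moreover have "quot X (take j z) \<noteq> k" using imin[of j] that ji i by auto
          ultimately show ?thesis using ji by (simp add: min_def)
        qed
        then show ?thesis using t by (auto simp: paths_def)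
      qed
      moreover have "drop i z \<in> lstar (paths \<Sigma> L K k k) @@ paths \<Sigma> L K k Y"
        using paths_insert_loop[OF assms d] .
      ultimately show ?thesis
        by (auto simp: lconc_def) (metis append_take_drop_id)
    qed
  qed
next
  show "paths \<Sigma> L K X Y \<union> (paths \<Sigma> L K X k @@ (lstar (paths \<Sigma> L K k k) @@ paths \<Sigma> L K k Y)) \<subseteq> paths \<Sigma> L (insert k K) X Y"
  proof
    fix z assume "z \<in> paths \<Sigma> L K X Y \<union> (paths \<Sigma> L K X k @@ (lstar (paths \<Sigma> L K k k) @@ paths \<Sigma> L K k Y))"
    then show "z \<in> paths \<Sigma> L (insert k K) X Y"
    proof
      assume "z \<in> paths \<Sigma> L K X Y" then show ?thesis by (rule subsetD[OF paths_mono[OF subset_insertI]])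
    next
      assume "z \<in> paths \<Sigma> L K X k @@ (lstar (paths \<Sigma> L K k k) @@ paths \<Sigma> L K k Y)"
      then obtain x y w where xyw: "z = x @ y @ w" "x \<in> paths \<Sigma> L K X k" "y \<in> lstar (paths \<Sigma> L K k k)" "w \<in> paths \<Sigma> L K k Y"
        by (auto simp: lconc_def)
      have "y \<in> paths \<Sigma> L (insert k K) k k" using paths_lstar[OF xyw(3)] .
      moreover have "w \<in> paths \<Sigma> L (insert k K) k Y" "x \<in> paths \<Sigma> L (insert k K) X k"
        using xyw(4,2) by (auto intro: subsetD[OF paths_mono[OF subset_insertI]])
      ultimately have yw: "y @ w \<in> paths \<Sigma> L (insert k K) k Y" by (metis paths_app insertI1)
      have "x @ (y @ w) \<in> paths \<Sigma> L (insert k K) X Y"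
        using \<open>x \<in> paths \<Sigma> L (insert k K) X k\<close> yw by (metis paths_app insertI1)
      then show ?thesis using xyw(1) by simp
    qed
  qed
qed

lemma rational_paths:
  assumes "finite \<Sigma>" "finite K"
  shows "rational (hw h ` paths \<Sigma> L K X Y)"
  using assms(2)
proof (induct K arbitrary: X Y rule: finite_induct)
  case empty
  have "finite (paths \<Sigma> L {} X Y)" unfolding paths_base using assms(1) by (auto intro: finite_subset[of _ "(\<lambda>a. [a]) ` \<Sigma>"])
  then show ?case unfolding paths_base by (intro rational.rat_finite) (simp add: paths_base)
next
  case (insert k K)
  show ?case unfolding paths_insert[OF insert(2)] image_Un hw_lconc hw_lstar
    by (intro rational.intros insert(3))
qed

lemma regular_rational:
  assumes "regular L" "finite \<Sigma>" "\<And>x. x \<in> L \<Longrightarrow> set x \<subseteq> \<Sigma>"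
  shows "rational (hw h ` L)"
proof -
  let ?S = "range (quot L)"
  have fin: "finite ?S" using assms(1) by (simp add: regular_def)
  have "L = (\<Union>Y\<in>{Y\<in>?S. [] \<in> Y}. paths \<Sigma> L ?S L Y)"
  proof
    show "L \<subseteq> (\<Union>Y\<in>{Y\<in>?S. [] \<in> Y}. paths \<Sigma> L ?S L Y)"
    proof
      fix x assume "x \<in> L"
      then have "x \<in> paths \<Sigma> L ?S L (quot L x)" "[] \<in> quot L x" using assms(3) by (auto simp: paths_def quot_def)
      then show "x \<in> (\<Union>Y\<in>{Y\<in>?S. [] \<in> Y}. paths \<Sigma> L ?S L Y)" by blast
    qed
  next
    show "(\<Union>Y\<in>{Y\<in>?S. [] \<in> Y}. paths \<Sigma> L ?S L Y) \<subseteq> L"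
    proof
      fix x assume "x \<in> (\<Union>Y\<in>{Y\<in>?S. [] \<in> Y}. paths \<Sigma> L ?S L Y)"
      then obtain Y where "[] \<in> Y" "quot L x = Y" by (auto simp: paths_def)
      then show "x \<in> L" by (auto simp: quot_def)
    qed
  qed
  then have "hw h ` L = (\<Union>Y\<in>{Y\<in>?S. [] \<in> Y}. hw h ` paths \<Sigma> L ?S L Y)" by blast
  also have "rational \<dots>"
    using fin by (intro rational_Union rational_paths assms(2)) auto
  finally show ?thesis .
qed

section \<open>Convolutions\<close>

fun conv :: "'a list \<Rightarrow> 'b list \<Rightarrow> ('a option \<times> 'b option) list" where
  "conv (a # u) (b # v) = (Some a, Some b) # conv u v"
| "conv (a # u) [] = (Some a, None) # conv u []"
| "conv [] (b # v) = (None, Some b) # conv [] v"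
| "conv [] [] = []"

fun o2l :: "'a option \<Rightarrow> 'a list" where
  "o2l None = []" | "o2l (Some a) = [a]"

definition sm :: "'a option list \<Rightarrow> 'a list" where
  "sm xs = concat (map o2l xs)"

lemma sm_simps[simp]: "sm [] = []" "sm (None # xs) = sm xs" "sm (Some a # xs) = a # sm xs"
  "sm (xs @ ys) = sm xs @ sm ys"
  by (simp_all add: sm_def)

lemma sm_map_Some[simp]: "sm (map Some xs) = xs"
  by (induct xs) simp_all

lemma sm_replicate_None[simp]: "sm (replicate n None) = []"
  by (induct n) simp_all

lemma sm_conv[simp]: "sm (map fst (conv u v)) = u" "sm (map snd (conv u v)) = v"
  by (induct u v rule: conv.induct) simp_all

lemma length_conv[simp]: "length (conv u v) = max (length u) (length v)"
  by (induct u v rule: conv.induct) simp_all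

lemma conv_inj: "conv u v = conv u' v' \<Longrightarrow> u = u' \<and> v = v'"
  by (metis sm_conv)

lemma map_fst_conv: "map fst (conv u v) = map Some u @ replicate (length v - length u) None"
  by (induct u v rule: conv.induct) simp_all

lemma map_snd_conv: "map snd (conv u v) = map Some v @ replicate (length u - length v) None"
  by (induct u v rule: conv.induct) simp_all

lemma conv_swap: "conv v u = map prod.swap (conv u v)"
  by (induct u v rule: conv.induct) simp_all

lemma conv_Nil_Nil_iff[simp]: "conv u v = [] \<longleftrightarrow> u = [] \<and> v = []"
  by (cases u; cases v) simp_all

definition CV :: "('a list \<times> 'b list) set \<Rightarrow> ('a option \<times> 'b option) list set" where
  "CV R = (\<lambda>(u, v). conv u v) ` R"

lemma CV_mem[simp]: "conv u v \<in> CV R \<longleftrightarrow> (u, v) \<in> R"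
  by (auto simp: CV_def dest: conv_inj)

lemma CV_Int: "CV (R \<inter> S) = CV R \<inter> CV S"
  by (auto simp: CV_def dest: conv_inj)

lemma CV_Un: "CV (R \<union> S) = CV R \<union> CV S"
  by (auto simp: CV_def)

lemma CV_Diff: "CV (R - S) = CV R - CV S"
  by (auto simp: CV_def dest: conv_inj)

definition SSr where "SSr = {(Some a, Some b) | a b. True}"
definition SNr where "SNr = {(Some a, None) | a. True}"
definition NSr where "NSr = {(None, Some b) | b. True}"

lemma lists_SS: "set x \<subseteq> SSr \<Longrightarrow> x = conv (sm (map fst x)) (sm (map snd x)) \<and> length (sm (map fst x)) = length (sm (map snd x))"
  by (induct x) (auto simp: SSr_def)

lemma lists_SN: "set x \<subseteq> SNr \<Longrightarrow> x = conv (sm (map fst x)) []"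
  by (induct x) (auto simp: SNr_def)

lemma lists_NS: "set x \<subseteq> NSr \<Longrightarrow> x = conv [] (sm (map snd x))"
  by (induct x) (auto simp: NSr_def)

lemma conv_app1: "length u1 = length v1 \<Longrightarrow> conv u1 v1 @ conv u2 [] = conv (u1 @ u2) v1"
  by (induct u1 v1 rule: list_induct2) simp_all

lemma conv_app2: "length u1 = length v1 \<Longrightarrow> conv u1 v1 @ conv [] v2 = conv u1 (v1 @ v2)"
  by (induct u1 v1 rule: list_induct2) simp_all

lemma conv_u_Nil: "set (conv u []) \<subseteq> SNr"
  by (induct u) (auto simp: SNr_def)

lemma conv_Nil_v: "set (conv [] v) \<subseteq> NSr"
  by (induct v) (auto simp: NSr_def)

lemma conv_shape: "conv u v \<in> {x. set x \<subseteq> SSr} @@ ({x. set x \<subseteq> SNr} \<union> {x. set x \<subseteq> NSr})"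
proof (induct u v rule: conv.induct)
  case (1 a u b v)
  then obtain x y where "conv u v = x @ y" "set x \<subseteq> SSr" "set y \<subseteq> SNr \<or> set y \<subseteq> NSr"
    by (auto simp: lconc_def)
  then show ?case unfolding lconc_def
    by (intro CollectI exI[of _ "(Some a, Some b) # x"] exI[of _ y]) (auto simp: SSr_def)
next
  case (2 a u)
  have "conv (a # u) [] = [] @ conv (a # u) []" "[] \<in> {x. set x \<subseteq> SSr}"
    "conv (a # u) [] \<in> {x. set x \<subseteq> SNr} \<union> {x. set x \<subseteq> NSr}"
    using conv_u_Nil[of "a # u"] by auto
  then show ?case unfolding lconc_def by blast
next
  case (3 b v)
  have "conv [] (b # v) = [] @ conv [] (b # v)" "[] \<in> {x. set x \<subseteq> SSr}"
    "conv [] (b # v) \<in> {x. set x \<subseteq> SNr} \<union> {x. set x \<subseteq> NSr}"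
    using conv_Nil_v[of "b # v"] by auto
  then show ?case unfolding lconc_def by blast
next
  case 4
  then show ?case unfolding lconc_def by (intro CollectI exI[of _ "[]"]) auto
qed

lemma Shape_eq: "CV UNIV = {x. set x \<subseteq> SSr} @@ ({x. set x \<subseteq> SNr} \<union> {x. set x \<subseteq> NSr})"
proof
  show "CV UNIV \<subseteq> {x. set x \<subseteq> SSr} @@ ({x. set x \<subseteq> SNr} \<union> {x. set x \<subseteq> NSr})"
    using conv_shape by (auto simp: CV_def)
next
  show "{x. set x \<subseteq> SSr} @@ ({x. set x \<subseteq> SNr} \<union> {x. set x \<subseteq> NSr}) \<subseteq> CV UNIV"
  proof
    fix z assume "z \<in> {x. set x \<subseteq> SSr} @@ ({x. set x \<subseteq> SNr} \<union> {x. set x \<subseteq> NSr})"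
    then obtain x y where xy: "z = x @ y" "set x \<subseteq> SSr" "set y \<subseteq> SNr \<or> set y \<subseteq> NSr"
      by (auto simp: lconc_def)
    from lists_SS[OF xy(2)] obtain u1 v1 where x: "x = conv u1 v1" "length u1 = length v1" by blast
    from xy(3) show "z \<in> CV UNIV"
    proof
      assume "set y \<subseteq> SNr"
      then have "y = conv (sm (map fst y)) []" by (rule lists_SN)
      then show ?thesis using xy(1) x conv_app1 by (metis CV_mem UNIV_I)
    next
      assume "set y \<subseteq> NSr"
      then have "y = conv [] (sm (map snd y))" by (rule lists_NS)
      then show ?thesis using xy(1) x conv_app2 by (metis CV_mem UNIV_I)
    qed
  qed
qed

lemma reg_Shape: "regular (CV UNIV)"
  unfolding Shape_eq by (intro reg_lconc reg_Un reg_lists)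

lemma CV_Compl: "CV (- R) = CV UNIV - CV R"
  by (auto simp: CV_def dest: conv_inj)

lemma reg_CV_Compl: "regular (CV R) \<Longrightarrow> regular (CV (- R))"
  unfolding CV_Compl by (intro reg_Diff reg_Shape)

lemma reg_CV_Int: "regular (CV R) \<Longrightarrow> regular (CV S) \<Longrightarrow> regular (CV (R \<inter> S))"
  unfolding CV_Int by (rule reg_Int)

lemma reg_CV_Un: "regular (CV R) \<Longrightarrow> regular (CV S) \<Longrightarrow> regular (CV (R \<union> S))"
  unfolding CV_Un by (rule reg_Un)

lemma reg_CV_Diff: "regular (CV R) \<Longrightarrow> regular (CV S) \<Longrightarrow> regular (CV (R - S))"
  unfolding CV_Diff by (rule reg_Diff)

lemma sm_o2l: "sm (map f x) = concat (map (\<lambda>r. o2l (f r)) x)"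
  by (simp add: sm_def comp_def)

lemma CV_prod_eq: "CV (L1 \<times> L2) = CV UNIV \<inter> {x. sm (map fst x) \<in> L1} \<inter> {x. sm (map snd x) \<in> L2}"
  by (auto simp: CV_def)

lemma reg_CV_prod:
  assumes "regular L1" "regular L2" shows "regular (CV (L1 \<times> L2))"
  unfolding CV_prod_eq sm_o2l
  by (intro reg_Int reg_Shape reg_hom_pre assms)

lemma reg_CV_swap: "regular (CV R) \<Longrightarrow> regular (CV (prod.swap ` R))"
proof -
  assume "regular (CV R)"
  moreover have "CV (prod.swap ` R) = map prod.swap ` CV R"
  proof (intro set_eqI iffI)
    fix x assume "x \<in> CV (prod.swap ` R)"
    then obtain u v where "(u, v) \<in> R" "x = conv v u" by (auto simp: CV_def)
    moreover have "conv u v \<in> CV R" using \<open>(u, v) \<in> R\<close> by simp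
    ultimately show "x \<in> map prod.swap ` CV R" by (simp add: conv_swap[of v u])
  next
    fix x assume "x \<in> map prod.swap ` CV R"
    then obtain u v where "(u, v) \<in> R" "x = map prod.swap (conv u v)" by (auto simp: CV_def)
    then have "x = conv v u" by (simp add: conv_swap[of v u])
    moreover have "(v, u) \<in> prod.swap ` R" using \<open>(u, v) \<in> R\<close> by (rule image_eqI[rotated]) simp
    ultimately show "x \<in> CV (prod.swap ` R)" by simp
  qed
  ultimately show ?thesis using reg_map_img by metis
qed

lemma reg_CV_fst:
  assumes "regular (CV R)" shows "regular (fst ` R)"
proof -
  have eq: "fst ` R = {u. map Some u \<in> {x. \<exists>n. x @ replicate n None \<in> map fst ` CV R}}"
  proof (intro set_eqI iffI)
    fix u assume "u \<in> fst ` R"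
    then obtain v where "(u, v) \<in> R" by force
    then show "u \<in> {u. map Some u \<in> {x. \<exists>n. x @ replicate n None \<in> map fst ` CV R}}"
      by (auto simp: CV_def map_fst_conv image_iff intro!: exI[of _ "length v - length u"] bexI[of _ "(u,v)"])
  next
    fix u assume "u \<in> {u. map Some u \<in> {x. \<exists>n. x @ replicate n None \<in> map fst ` CV R}}"
    then obtain n u' v where "map Some u @ replicate n None = map fst (conv u' v)" "(u', v) \<in> R"
      by (auto simp: CV_def)
    then have "sm (map Some u @ replicate n None) = sm (map fst (conv u' v))" by simp
    then have "u = u'" by simp
    then show "u \<in> fst ` R" using \<open>(u', v) \<in> R\<close> by force
  qed
  show ?thesis unfolding eq by (intro reg_map_pre reg_unpad reg_map_img assms)
qed

lemma reg_CV_snd: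
  assumes "regular (CV R)" shows "regular (snd ` R)"
proof -
  have "snd ` R = fst ` (prod.swap ` R)" by force
  then show ?thesis using reg_CV_fst[OF reg_CV_swap[OF assms]] by simp
qed

lemma reg_CV_Id: "regular (CV Id)"
proof -
  have eq: "CV Id = {x. set x \<subseteq> {(Some a, Some a) | a. True}}"
  proof (intro set_eqI iffI)
    fix x assume "x \<in> CV Id"
    then obtain u where "x = conv u u" by (auto simp: CV_def)
    then show "x \<in> {x. set x \<subseteq> {(Some a, Some a) | a. True}}" by (induct u arbitrary: x) auto
  next
    fix x assume "x \<in> {x. set x \<subseteq> {(Some a, Some a) | a. True}}"
    then have "x = conv (sm (map fst x)) (sm (map fst x))" by (induct x) auto
    then show "x \<in> CV Id" by (metis CV_mem IdI)
  qed
  show ?thesis unfolding eq by (rule reg_lists)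
qed

lemma reg_singleton: "regular {x}"
  by (rule reg_finite) simp

section \<open>VPA run lemmas\<close>

lemma run_Nil[simp]: "run A c [] = c" by (simp add: run_def)
lemma run_Cons[simp]: "run A c (a # w) = run A (step A c a) w" by (simp add: run_def)
lemma run_append: "run A c (u @ v) = run A (run A c u) v" by (simp add: run_def)
lemma run_snoc: "run A c (w @ [a]) = step A (run A c w) a" by (simp add: run_def)

lemma lang_append: "u @ v \<in> lang A c \<longleftrightarrow> v \<in> lang A (run A c u)"
  by (simp add: lang_def run_append)

lemma lang_run: "lang A (run A c u) = {v. u @ v \<in> lang A c}"
  by (auto simp: lang_append)

definition hgt :: "('q, 'g, 'a) vpa \<Rightarrow> 'a list \<Rightarrow> int" where
  "hgt A w = sum_list (map (\<lambda>a. case kind A a of KCall \<Rightarrow> 1 | KRet \<Rightarrow> -1 | KInt \<Rightarrow> 0) w)"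

lemma hgt_Nil[simp]: "hgt A [] = 0" by (simp add: hgt_def)
lemma hgt_snoc: "hgt A (w @ [a]) = hgt A w + (case kind A a of KCall \<Rightarrow> 1 | KRet \<Rightarrow> -1 | KInt \<Rightarrow> 0)"
  by (simp add: hgt_def)
lemma hgt_append: "hgt A (u @ v) = hgt A u + hgt A v" by (simp add: hgt_def)

lemma hgt_take_Suc:
  "i < length w \<Longrightarrow> hgt A (take (Suc i) w) = hgt A (take i w) + (case kind A (w ! i) of KCall \<Rightarrow> 1 | KRet \<Rightarrow> -1 | KInt \<Rightarrow> 0)"
  by (simp add: take_Suc_conv_app_nth hgt_snoc)

definition good :: "'g \<Rightarrow> 'g list \<Rightarrow> bool" where
  "good b s \<longleftrightarrow> s \<noteq> [] \<and> hd s = b \<and> b \<notin> set (tl s)"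

lemma step_pre:
  assumes "s \<noteq> []" "hd s = bot A"
  shows "step A (pre @ s, p) a = (pre @ fst (step A (s, p) a), snd (step A (s, p) a))
     \<and> fst (step A (s, p) a) \<noteq> [] \<and> hd (fst (step A (s, p) a)) = bot A"
proof (cases "kind A a")
  case KRet
  show ?thesis
  proof (cases "last s = bot A")
    case False
    obtain x s' where s0: "s = x # s'" using assms by (cases s) auto
    have "s' \<noteq> []" using False assms s0 by auto
    note s = s0 this
    then have "butlast (pre @ s) = pre @ butlast s" by (simp add: butlast_append)
    moreover have "butlast s \<noteq> []" "hd (butlast s) = bot A" using s assms by auto
    ultimately show ?thesis using KRet False assms by (simp add: last_append)
  qed (use KRet assms in simp)
qed (use assms in \<open>simp_all add: hd_append\<close>)

lemma run_pre:
  assumes "s \<noteq> []" "hd s = bot A"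
  shows "run A (pre @ s, p) w = (pre @ fst (run A (s, p) w), snd (run A (s, p) w))
     \<and> fst (run A (s, p) w) \<noteq> [] \<and> hd (fst (run A (s, p) w)) = bot A"
  using assms
proof (induct w arbitrary: s p)
  case Nil then show ?case by simp
next
  case (Cons a w)
  obtain s1 p1 where st: "step A (s, p) a = (s1, p1)" by fastforce
  have 1: "step A (pre @ s, p) a = (pre @ s1, p1)" "s1 \<noteq> []" "hd s1 = bot A"
    using step_pre[OF Cons(2,3), of pre p a] st by auto
  show ?case using Cons(1)[OF 1(2,3), of p1] 1(1) st by simp
qed

lemma lang_pre:
  assumes "s \<noteq> []" "hd s = bot A"
  shows "lang A (pre @ s, p) = lang A (s, p)"
  using run_pre[OF assms] by (simp add: lang_def)

lemma lang_bots:
  assumes "B \<noteq> []" "set B \<subseteq> {bot A}"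
  shows "lang A (B, p) = lang A ([bot A], p)"
proof -
  have "B = butlast B @ [bot A]" using assms by (metis append_butlast_last_id insert_subset last_in_set singletonD subset_insertI2 subsetD)
  then show ?thesis using lang_pre[of "[bot A]" A "butlast B" p] by simp
qed

context
  fixes A :: "('q, 'g, 'a) vpa"
  assumes wf: "wf_vpa A"
begin

lemma wf_push: "kind A a = KCall \<Longrightarrow> fst (dc A p a) \<noteq> bot A"
  using wf by (simp add: wf_vpa_def)

lemma step_above:
  assumes "T \<noteq> []" "bot A \<notin> set T"
  shows "step A (B @ T, p) a = (B @ fst (step A (T, p) a), snd (step A (T, p) a))
     \<and> int (length (fst (step A (T, p) a))) = int (length T) + (case kind A a of KCall \<Rightarrow> 1 | KRet \<Rightarrow> -1 | KInt \<Rightarrow> 0)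
     \<and> bot A \<notin> set (fst (step A (T, p) a))"
proof -
  have lT: "last T \<noteq> bot A" using assms by (metis last_in_set)
  show ?thesis
  proof (cases "kind A a")
    case KCall
    then show ?thesis using wf_push[OF KCall, of p] assms by auto
  next
    case KRet
    have "length T \<ge> 1" using assms by (cases T) auto
    then show ?thesis using assms lT KRet by (auto simp: butlast_append last_append of_nat_diff dest: in_set_butlastD)
  next
    case KInt then show ?thesis using assms by simp
  qed
qed

lemma run_above:
  assumes "bot A \<notin> set T" "\<forall>j<length w. int (length T) + hgt A (take j w) > 0"
  shows "run A (B @ T, q) w = (B @ fst (run A (T, q) w), snd (run A (T, q) w))
     \<and> int (length (fst (run A (T, q) w))) = int (length T) + hgt A w
     \<and> bot A \<notin> set (fst (run A (T, q) w))"
  using assms(2)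
proof (induct w rule: rev_induct)
  case Nil then show ?case using assms(1) by simp
next
  case (snoc a w)
  have IH: "run A (B @ T, q) w = (B @ fst (run A (T, q) w), snd (run A (T, q) w))"
    "int (length (fst (run A (T, q) w))) = int (length T) + hgt A w"
    "bot A \<notin> set (fst (run A (T, q) w))"
    using snoc(1) snoc(2) by (auto simp: nth_append)
  have "int (length T) + hgt A (take (length w) (w @ [a])) > 0" using snoc(2)[rule_format, of "length w"] by simp
  then have ne: "fst (run A (T, q) w) \<noteq> []" using IH(2) by auto
  show ?case using step_above[OF ne IH(3), of B "snd (run A (T, q) w)" a] IH
    by (simp add: run_snoc hgt_snoc)
qed

lemma run_above_len:
  assumes "bot A \<notin> set T" "T \<noteq> []" "\<forall>j\<le>length w. length (fst (run A (B @ T, q) (take j w))) > length B"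
  shows "run A (B @ T, q) w = (B @ fst (run A (T, q) w), snd (run A (T, q) w))
     \<and> int (length (fst (run A (T, q) w))) = int (length T) + hgt A w
     \<and> bot A \<notin> set (fst (run A (T, q) w))"
  using assms(3)
proof (induct w rule: rev_induct)
  case Nil then show ?case using assms(1) by simp
next
  case (snoc a w)
  have pre: "\<forall>j\<le>length w. length B < length (fst (run A (B @ T, q) (take j w)))"
  proof (intro allI impI)
    fix j assume "j \<le> length w" then show "length B < length (fst (run A (B @ T, q) (take j w)))"
      using snoc(2)[rule_format, of j] by simp
  qed
  have IH: "run A (B @ T, q) w = (B @ fst (run A (T, q) w), snd (run A (T, q) w))"
    "int (length (fst (run A (T, q) w))) = int (length T) + hgt A w"
    "bot A \<notin> set (fst (run A (T, q) w))"
    using snoc(1)[OF pre] by auto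
  have "length (fst (run A (B @ T, q) (take (length w) (w @ [a])))) > length B" using snoc(2)[rule_format, of "length w"] by simp
  then have ne: "fst (run A (T, q) w) \<noteq> []" using IH(1) by auto
  show ?case using step_above[OF ne IH(3), of B "snd (run A (T, q) w)" a] IH
    by (simp add: run_snoc hgt_snoc)
qed

lemma run_above_hgt:
  assumes "bot A \<notin> set T" "T \<noteq> []" "\<forall>j\<le>length w. length (fst (run A (B @ T, q) (take j w))) > length B"
  shows "\<forall>j\<le>length w. int (length T) + hgt A (take j w) > 0"
proof (intro allI impI)
  fix j assume j: "j \<le> length w"
  have "\<forall>i\<le>length (take j w). length (fst (run A (B @ T, q) (take i (take j w)))) > length B"
    using assms(3) j by (auto simp: min_def)
  from run_above_len[OF assms(1,2) this] have
    e1: "run A (B @ T, q) (take j w) = (B @ fst (run A (T, q) (take j w)), snd (run A (T, q) (take j w)))"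
    and e2: "int (length (fst (run A (T, q) (take j w)))) = int (length T) + hgt A (take j w)" by auto
  have "length (fst (run A (B @ T, q) (take j w))) > length B" using assms(3) j by auto
  then have "0 < int (length (fst (run A (T, q) (take j w))))" using e1 by simp
  then show "int (length T) + hgt A (take j w) > 0" using e2 by linarith
qed

lemma good_step: "good (bot A) s \<Longrightarrow> good (bot A) (fst (step A (s, p) a))"
proof -
  assume g: "good (bot A) s"
  then obtain s' where s: "s = bot A # s'" "bot A \<notin> set s'" by (cases s) (auto simp: good_def)
  show ?thesis
  proof (cases "kind A a")
    case KCall then show ?thesis using g wf_push[OF KCall, of p] s by (auto simp: good_def)
  next
    case KRet
    show ?thesis
    proof (cases "s' = []")
      case True then show ?thesis using s KRet by (simp add: good_def)
    next
      case False
      then have "last s \<noteq> bot A" using s by (metis last_ConsR last_in_set)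
      then show ?thesis using s KRet False by (auto simp: good_def dest: in_set_butlastD)
    qed
  next
    case KInt then show ?thesis using g by simp
  qed
qed

lemma good_run: "good (bot A) s \<Longrightarrow> good (bot A) (fst (run A (s, p) w))"
proof (induct w arbitrary: s p)
  case (Cons a w)
  then show ?case using good_step[OF Cons(2), of p a]
    by (cases "step A (s, p) a") (simp add: Cons(1))
qed simp

lemma rConf_good: "c \<in> rConf A \<Longrightarrow> good (bot A) (fst c)"
  unfolding rConf_def init_conf_def using good_run[of "[bot A]"] by (auto simp: good_def)

lemma run_cap:
  assumes "bot A \<notin> set gs" "\<forall>j<length w. int (length gs) + hgt A (take j w) + int i \<ge> 0"
  shows "\<exists>gs'. fst (run A (bot A # gs, q) w) = bot A # gs' \<and> bot A \<notin> set gs'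
     \<and> int (length gs') \<le> max 0 (int (length gs) + hgt A w + int i)"
  using assms(2)
proof (induct w rule: rev_induct)
  case Nil then show ?case using assms(1) by auto
next
  case (snoc a w)
  obtain gs' where IH: "fst (run A (bot A # gs, q) w) = bot A # gs'" "bot A \<notin> set gs'"
     "int (length gs') \<le> max 0 (int (length gs) + hgt A w + int i)"
    using snoc(1) snoc(2) by (auto simp: nth_append)
  have pos: "int (length gs) + hgt A w + int i \<ge> 0" using snoc(2)[rule_format, of "length w"] by simp
  obtain p where r: "run A (bot A # gs, q) w = (bot A # gs', p)" using IH(1) by (metis prod.collapse)
  show ?case
  proof (cases "kind A a")
    case KCall
    then show ?thesis using r IH pos wf_push[OF KCall, of p] by (auto simp: run_snoc hgt_snoc)
  next
    case KRet
    show ?thesis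
    proof (cases "gs' = []")
      case True then show ?thesis using r KRet by (auto simp: run_snoc hgt_snoc)
    next
      case False
      then have "last (bot A # gs') \<noteq> bot A" using IH(2) by (metis last_ConsR last_in_set)
      then show ?thesis using r KRet False IH pos
        by (auto simp: run_snoc hgt_snoc dest: in_set_butlastD)
    qed
  next
    case KInt
    then show ?thesis using r IH by (auto simp: run_snoc hgt_snoc)
  qed
qed

end

definition nohit :: "('q, 'g, 'a) vpa \<Rightarrow> nat \<Rightarrow> 'a list \<Rightarrow> bool" where
  "nohit A n w \<longleftrightarrow> (\<forall>i\<le>length w. int n + hgt A (take i w) > 0)"

definition hit :: "('q, 'g, 'a) vpa \<Rightarrow> nat \<Rightarrow> 'a list \<Rightarrow> bool" where
  "hit A n u \<longleftrightarrow> int n + hgt A u = 0 \<and> (\<forall>i<length u. int n + hgt A (take i u) > 0)"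

lemma split_hit:
  assumes "\<not> nohit A n w"
  shows "\<exists>u v. w = u @ v \<and> hit A n u"
proof -
  have ex: "\<exists>i. i \<le> length w \<and> int n + hgt A (take i w) \<le> 0" using assms by (auto simp: nohit_def not_less)
  define i where "i = (LEAST i. i \<le> length w \<and> int n + hgt A (take i w) \<le> 0)"
  have i: "i \<le> length w \<and> int n + hgt A (take i w) \<le> 0" unfolding i_def by (rule LeastI_ex[OF ex])
  have imin: "\<And>j. j < i \<Longrightarrow> int n + hgt A (take j w) > 0"
  proof -
    fix j assume "j < i"
    then have "\<not> (j \<le> length w \<and> int n + hgt A (take j w) \<le> 0)" unfolding i_def by (rule not_less_Least)
    then show "int n + hgt A (take j w) > 0" using \<open>j < i\<close> i by auto
  qed
  have "int n + hgt A (take i w) = 0"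
  proof (cases i)
    case 0 then show ?thesis using i by simp
  next
    case (Suc j)
    then have "j < length w" using i by simp
    then have "hgt A (take i w) \<ge> hgt A (take j w) - 1" using Suc hgt_take_Suc[of j w A]
      by (auto split: lkind.splits)
    then show ?thesis using imin[of j] Suc i by simp
  qed
  moreover have "\<forall>j<length (take i w). int n + hgt A (take j (take i w)) > 0" using imin by (simp add: min_def)
  ultimately have "hit A n (take i w)" by (simp add: hit_def)
  then show ?thesis by (metis append_take_drop_id)
qed

definition pv :: "('q, 'g, 'a) vpa \<Rightarrow> 'g list \<Rightarrow> 'g list \<Rightarrow> bool" where
  "pv A B T \<longleftrightarrow> B \<noteq> [] \<and> (\<exists>k al. B @ T = replicate k (bot A) @ al \<and> good (bot A) al)"

lemma pv_cases:
  assumes "pv A B T"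
  shows "bot A \<notin> set T \<or> (\<exists>i gs m. B = replicate m (bot A) \<and> m \<ge> 1 \<and> T = replicate i (bot A) @ bot A # gs \<and> bot A \<notin> set gs)"
proof -
  obtain k al where k: "B @ T = replicate k (bot A) @ al" "good (bot A) al" "B \<noteq> []" using assms by (auto simp: pv_def)
  then obtain gs where al: "al = bot A # gs" "bot A \<notin> set gs" by (cases al) (auto simp: good_def)
  have S: "B @ T = replicate (Suc k) (bot A) @ gs" using k al by (simp add: replicate_app_Cons_same)
  show ?thesis
  proof (cases "length B \<le> k")
    case True
    have "B = take (length B) (B @ T)" by simp
    also have "\<dots> = replicate (length B) (bot A)" unfolding S using True by (simp add: take_append min_def del: replicate_Suc)
    finally have B: "B = replicate (length B) (bot A)" .
    have "T = drop (length B) (B @ T)" by simp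
    also have "\<dots> = replicate (Suc k - length B) (bot A) @ gs" unfolding S using True
      by (simp add: drop_append del: replicate_Suc)
    also have "\<dots> = replicate (k - length B) (bot A) @ bot A # gs" using True
      by (simp add: Suc_diff_le replicate_app_Cons_same)
    finally show ?thesis using B al k(3) by (metis length_greater_0_conv less_eq_Suc_le One_nat_def)
  next
    case False
    have "T = drop (length B) (B @ T)" by simp
    also have "\<dots> = drop (length B - Suc k) gs" unfolding S using False by (simp add: drop_append del: replicate_Suc)
    finally have "set T \<subseteq> set gs" by (metis set_drop_subset)
    then show ?thesis using al by auto
  qed
qed

lemma pv_bot: "pv A B T \<Longrightarrow> pv A [bot A] T"
proof -
  assume "pv A B T"
  from pv_cases[OF this] show "pv A [bot A] T"
  proof
    assume nb: "bot A \<notin> set T"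
    obtain k al where k: "B @ T = replicate k (bot A) @ al" "good (bot A) al" using \<open>pv A B T\<close> by (auto simp: pv_def)
    then obtain gs where al: "al = bot A # gs" "bot A \<notin> set gs" by (cases al) (auto simp: good_def)
    have "set T \<subseteq> set gs"
    proof -
      have "T \<noteq> [] \<Longrightarrow> length T \<le> length gs"
      proof (rule ccontr)
        assume "T \<noteq> []" "\<not> length T \<le> length gs"
        then have "length T > length gs" by simp
        have "bot A \<in> set (B @ T)" using k al by simp
        have "rev (B @ T) = rev gs @ bot A # replicate k (bot A)" using k al by simp
        then have "rev T @ rev B = rev gs @ bot A # replicate k (bot A)" by simp
        then have "rev T ! length gs = bot A" using \<open>length T > length gs\<close>
          by (metis length_rev nth_append_length nth_append)
        then have "bot A \<in> set T" using \<open>length T > length gs\<close> by (metis length_rev nth_mem set_rev)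
        then show False using nb by simp
      qed
      moreover have "T = drop (length B + k + 1 - length B - (length B + k + 1 - length B)) T" by simp
      have "rev (B @ T) = rev gs @ bot A # replicate k (bot A)" using k al by simp
      then have "rev T @ rev B = rev gs @ bot A # replicate k (bot A)" by simp
      ultimately show ?thesis
        by (metis append_eq_append_conv_if set_rev set_take_subset  le_refl  length_rev take_all nle_le
            subset_code(1) empty_iff set_empty2)
    qed
    then have "good (bot A) (bot A # T)" using al by (auto simp: good_def)
    then show ?thesis unfolding pv_def by (intro conjI exI[of _ 0] exI[of _ "bot A # T"]) auto
  next
    assume "\<exists>i gs m. B = replicate m (bot A) \<and> m \<ge> 1 \<and> T = replicate i (bot A) @ bot A # gs \<and> bot A \<notin> set gs"
    then obtain i gs where "T = replicate i (bot A) @ bot A # gs" "bot A \<notin> set gs" by auto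
    then show ?thesis unfolding pv_def
      by (intro conjI exI[of _ "Suc i"] exI[of _ "bot A # gs"]) (auto simp: good_def replicate_app_Cons_same)
  qed
qed

context
  fixes A :: "('q, 'g, 'a) vpa"
  assumes wf: "wf_vpa A"
begin

lemma D_lemma:
  assumes "pv A B T"
  shows "nohit A (length T) w \<Longrightarrow> snd (run A (B @ T, q) w) = snd (run A ([bot A] @ T, q) w)"
    and "hit A (length T) u \<Longrightarrow> snd (run A (B @ T, q) u) = snd (run A ([bot A] @ T, q) u)
          \<and> lang A (run A (B @ T, q) u) = lang A (B, snd (run A (B @ T, q) u))"
proof -
  from pv_cases[OF assms] have cases: "bot A \<notin> set T \<or> (\<exists>i gs m. B = replicate m (bot A) \<and> m \<ge> 1 \<and> T = replicate i (bot A) @ bot A # gs \<and> bot A \<notin> set gs)" .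
  {
    assume nb: "bot A \<notin> set T"
    {
      fix w assume "nohit A (length T) w"
      then have c: "\<forall>j<length w. int (length T) + hgt A (take j w) > 0" by (auto simp: nohit_def)
      have "snd (run A (B @ T, q) w) = snd (run A ([bot A] @ T, q) w)"
        using run_above[OF wf nb c, of B q] run_above[OF wf nb c, of "[bot A]" q] by simp
    } note r1 = this
    {
      fix u assume h: "hit A (length T) u"
      then have c: "\<forall>j<length u. int (length T) + hgt A (take j u) > 0" by (auto simp: hit_def)
      have e: "fst (run A (T, q) u) = []" using run_above[OF wf nb c, of B q] h by (simp add: hit_def)
      have "snd (run A (B @ T, q) u) = snd (run A ([bot A] @ T, q) u)
          \<and> lang A (run A (B @ T, q) u) = lang A (B, snd (run A (B @ T, q) u))"
        using run_above[OF wf nb c, of B q] run_above[OF wf nb c, of "[bot A]" q] e by simp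
    } note r2 = this
    note r1 r2
  } note C1 = this
  {
    fix i gs m assume B: "B = replicate m (bot A)" "m \<ge> 1" and T: "T = replicate i (bot A) @ bot A # gs" and gs: "bot A \<notin> set gs"
    have BT: "B @ T = replicate (m + i) (bot A) @ bot A # gs" using B T by (simp add: replicate_add)
    have BT1: "[bot A] @ T = replicate (1 + i) (bot A) @ bot A # gs" using T by simp
    note rp = run_pre[of "bot A # gs" A "replicate (m + i) (bot A)" q] run_pre[of "bot A # gs" A "replicate (1 + i) (bot A)" q]
    {
      fix w
      have "snd (run A (B @ T, q) w) = snd (run A ([bot A] @ T, q) w)"
        unfolding BT BT1 using rp by simp
    } note r1 = this
    {
      fix u assume h: "hit A (length T) u"
      have c: "\<forall>j<length u. int (length gs) + hgt A (take j u) + int i \<ge> 0"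
        using h T by (auto simp: hit_def)
      obtain gs' where g: "fst (run A (bot A # gs, q) u) = bot A # gs'"
        "int (length gs') \<le> max 0 (int (length gs) + hgt A u + int i)"
        using run_cap[OF wf gs c] by blast
      have "int (length gs) + hgt A u + int i = -1" using h T by (simp add: hit_def)
      then have "gs' = []" using g(2) by simp
      have "run A (B @ T, q) u = (replicate (m + i) (bot A) @ fst (run A (bot A # gs, q) u), snd (run A (B @ T, q) u))"
        unfolding BT using rp(1) by simp
      then have "run A (B @ T, q) u = (replicate (m + i) (bot A) @ [bot A], snd (run A (B @ T, q) u))"
        using g(1) \<open>gs' = []\<close> by simp
      moreover have l1: "lang A (replicate (m + i) (bot A) @ [bot A], p) = lang A ([bot A], p)" for p
        by (rule lang_bots) auto
      moreover have l2: "lang A (B, p) = lang A ([bot A], p)" for p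
        using B by (intro lang_bots) auto
      ultimately have "lang A (run A (B @ T, q) u) = lang A (B, snd (run A (B @ T, q) u))"
        by (metis l1 l2)
      then have "snd (run A (B @ T, q) u) = snd (run A ([bot A] @ T, q) u)
          \<and> lang A (run A (B @ T, q) u) = lang A (B, snd (run A (B @ T, q) u))" using r1 by simp
    } note r2 = this
    note r1 r2
  } note C2 = this
  show "nohit A (length T) w \<Longrightarrow> snd (run A (B @ T, q) w) = snd (run A ([bot A] @ T, q) w)"
    using cases C1(1) C2(1) by blast
  show "hit A (length T) u \<Longrightarrow> snd (run A (B @ T, q) u) = snd (run A ([bot A] @ T, q) u)
          \<and> lang A (run A (B @ T, q) u) = lang A (B, snd (run A (B @ T, q) u))"
    using cases C1(2) C2(2) by blast
qed

lemma EQ_thm: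
  assumes "pv A B1 T1" "pv A B2 T2" "length T1 = n" "length T2 = n"
  shows "lang A (B1 @ T1, q1) = lang A (B2 @ T2, q2) \<longleftrightarrow>
    (\<forall>w. nohit A n w \<longrightarrow> (snd (run A ([bot A] @ T1, q1) w) \<in> fin A \<longleftrightarrow> snd (run A ([bot A] @ T2, q2) w) \<in> fin A))
    \<and> (\<forall>u. hit A n u \<longrightarrow> lang A (B1, snd (run A ([bot A] @ T1, q1) u)) = lang A (B2, snd (run A ([bot A] @ T2, q2) u)))"
  (is "?L \<longleftrightarrow> ?N \<and> ?H")
proof
  assume L: ?L
  have ?N
  proof (intro allI impI)
    fix w assume "nohit A n w"
    then show "snd (run A ([bot A] @ T1, q1) w) \<in> fin A \<longleftrightarrow> snd (run A ([bot A] @ T2, q2) w) \<in> fin A"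
      using D_lemma(1)[OF assms(1), of w q1] D_lemma(1)[OF assms(2), of w q2] assms(3,4) L
      by (metis (mono_tags) lang_def mem_Collect_eq)
  qed
  moreover have ?H
  proof (intro allI impI)
    fix u assume "hit A n u"
    then show "lang A (B1, snd (run A ([bot A] @ T1, q1) u)) = lang A (B2, snd (run A ([bot A] @ T2, q2) u))"
      using D_lemma(2)[OF assms(1), of u q1] D_lemma(2)[OF assms(2), of u q2] assms(3,4) L
      by (metis lang_run)
  qed
  ultimately show "?N \<and> ?H" ..
next
  assume NH: "?N \<and> ?H"
  show ?L
  proof (intro set_eqI)
    fix w
    show "w \<in> lang A (B1 @ T1, q1) \<longleftrightarrow> w \<in> lang A (B2 @ T2, q2)"
    proof (cases "nohit A n w")
      case True
      then show ?thesis
        using D_lemma(1)[OF assms(1), of w q1] D_lemma(1)[OF assms(2), of w q2] assms(3,4) NH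
        by (simp add: lang_def)
    next
      case False
      then obtain u v where uv: "w = u @ v" "hit A n u" using split_hit by blast
      have "w \<in> lang A (B1 @ T1, q1) \<longleftrightarrow> v \<in> lang A (B1, snd (run A ([bot A] @ T1, q1) u))"
        using D_lemma(2)[OF assms(1), of u q1] uv assms(3) by (simp add: lang_append)
      moreover have "w \<in> lang A (B2 @ T2, q2) \<longleftrightarrow> v \<in> lang A (B2, snd (run A ([bot A] @ T2, q2) u))"
        using D_lemma(2)[OF assms(2), of u q2] uv assms(4) by (simp add: lang_append)
      ultimately show ?thesis using NH uv by simp
    qed
  qed
qed

end

lemma step_len_le: "kind A a \<noteq> KCall \<Longrightarrow> length (fst (step A c a)) \<le> length (fst c)"
  by (cases c; cases "kind A a") auto

lemma step_call: "kind A a = KCall \<Longrightarrow> step A (S, p) a = (S @ [fst (dc A p a)], snd (dc A p a))"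
  by simp

context
  fixes A :: "('q, 'g, 'a) vpa"
  assumes wf: "wf_vpa A"
begin

lemma reach_extend:
  assumes "(al, p) \<in> rConf A" "kind A a = KCall" "\<forall>j<length w. 1 + hgt A (take j w) > 0"
    "run A ([fst (dc A p a)], snd (dc A p a)) w = (be, q)"
  shows "(al @ be, q) \<in> rConf A"
proof -
  obtain x where x: "run A (init_conf A) x = (al, p)" using assms(1) by (auto simp: rConf_def)
  have nb: "bot A \<notin> set [fst (dc A p a)]" using wf_push[OF wf assms(2), of p] by (auto dest: sym)
  have "run A (init_conf A) (x @ a # w) = run A (al @ [fst (dc A p a)], snd (dc A p a)) w"
    using x assms(2) by (simp add: run_append)
  also have "\<dots> = (al @ be, q)" using run_above[OF wf nb, of w B q] assms(3,4)
    by (metis run_above[OF wf nb] assms(3,4) fst_conv snd_conv length_Cons list.size(3) of_nat_1 One_nat_def)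
  finally have "run A (init_conf A) (x @ a # w) = (al @ be, q)" .
  then show ?thesis unfolding rConf_def by (metis (mono_tags, lifting) mem_Collect_eq)
qed

lemma reach_decomp:
  assumes "al \<noteq> []" "be \<noteq> []" "(al @ be, q) \<in> rConf A"
  shows "\<exists>p a w. (al, p) \<in> rConf A \<and> kind A a = KCall \<and> (\<forall>j<length w. 1 + hgt A (take j w) > 0)
           \<and> run A ([fst (dc A p a)], snd (dc A p a)) w = (be, q)"
proof -
  obtain x where x: "run A (init_conf A) x = (al @ be, q)" using assms(3) by (auto simp: rConf_def)
  define Lj where "Lj j = length (fst (run A (init_conf A) (take j x)))" for j
  define K where "K = {j. j \<le> length x \<and> Lj j \<le> length al}"
  have "0 \<in> K" using assms(1) by (auto simp: K_def Lj_def init_conf_def Suc_le_eq)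
  have finK: "finite K" by (auto simp: K_def)
  define k where "k = Max K"
  have kK: "k \<in> K" using Max_in[OF finK] \<open>0 \<in> K\<close> by (auto simp: k_def)
  have kmax: "\<And>j. j \<in> K \<Longrightarrow> j \<le> k" using finK by (auto simp: k_def)
  have "length x \<notin> K" using x assms(2) by (auto simp: K_def Lj_def)
  then have klt: "k < length x" using kK by (auto simp: K_def order.order_iff_strict)
  have above: "\<And>j. k < j \<Longrightarrow> j \<le> length x \<Longrightarrow> Lj j > length al"
    using kmax by (force simp: K_def)
  obtain S p where Sp: "run A (init_conf A) (take k x) = (S, p)" by fastforce
  define a where "a = x ! k"
  have tk: "take (Suc k) x = take k x @ [a]" using klt by (simp add: a_def take_Suc_conv_app_nth)
  have r1: "run A (init_conf A) (take (Suc k) x) = step A (S, p) a" using Sp tk by (simp add: run_snoc)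
  have "Lj (Suc k) > length al" using above klt by simp
  moreover have "Lj k \<le> length al" using kK by (simp add: K_def)
  ultimately have call: "kind A a = KCall"
    using step_len_le[of A a "(S, p)"] r1 Sp by (auto simp: Lj_def)
  then have r1': "run A (init_conf A) (take (Suc k) x) = (S @ [fst (dc A p a)], snd (dc A p a))" using r1 by simp
  have lenS: "length S = length al"
    using \<open>Lj (Suc k) > length al\<close> \<open>Lj k \<le> length al\<close> r1' Sp by (simp add: Lj_def)
  define w where "w = drop (Suc k) x"
  have xw: "x = take (Suc k) x @ w" by (simp add: w_def)
  have runw: "run A (S @ [fst (dc A p a)], snd (dc A p a)) (take j w) = run A (init_conf A) (take (Suc k + j) x)" for j
    unfolding w_def take_add run_append r1' ..
  have cond: "\<forall>j\<le>length w. length (fst (run A (S @ [fst (dc A p a)], snd (dc A p a)) (take j w))) > length S"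
  proof (intro allI impI)
    fix j assume "j \<le> length w"
    then have "Lj (Suc k + j) > length al" using above klt by (simp add: w_def)
    then show "length (fst (run A (S @ [fst (dc A p a)], snd (dc A p a)) (take j w))) > length S"
      using runw[of j] lenS by (simp add: Lj_def)
  qed
  have nb: "bot A \<notin> set [fst (dc A p a)]" using wf_push[OF wf call, of p] by (auto dest: sym)
  have ra: "run A (S @ [fst (dc A p a)], snd (dc A p a)) w = (S @ fst (run A ([fst (dc A p a)], snd (dc A p a)) w), snd (run A ([fst (dc A p a)], snd (dc A p a)) w))"
    using run_above_len[OF wf nb _ cond] by simp
  have "run A (S @ [fst (dc A p a)], snd (dc A p a)) w = (al @ be, q)"
    using runw[of "length w"] x by (simp add: w_def)
  then have eqs: "S = al" "fst (run A ([fst (dc A p a)], snd (dc A p a)) w) = be" "snd (run A ([fst (dc A p a)], snd (dc A p a)) w) = q"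
    using ra lenS by auto
  have hg: "\<forall>j\<le>length w. int (length [fst (dc A p a)]) + hgt A (take j w) > 0"
    using run_above_hgt[OF wf nb _ cond] by simp
  have "(al, p) \<in> rConf A" using Sp eqs(1) unfolding rConf_def by (metis (mono_tags, lifting) mem_Collect_eq)
  moreover have "\<forall>j<length w. 1 + hgt A (take j w) > 0" using hg by simp
  ultimately show ?thesis using call eqs by (metis prod.collapse)
qed

end

definition rw :: "('g, 'q) conf \<Rightarrow> ('g + 'q) list" where
  "rw c = Inr (snd c) # map Inl (rev (fst c))"

lemma rw_conf_word: "rw c = rev (conf_word c)"
  by (simp add: rw_def conf_word_def rev_map)

lemma rw_inj: "rw c = rw c' \<Longrightarrow> c = c'"
  by (cases c; cases c') (auto simp: rw_def inj_map_eq_map[OF inj_Inl])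

lemma conf_word_inj: "conf_word c = conf_word c' \<Longrightarrow> c = c'"
  by (metis rw_conf_word rw_inj)

definition Good :: "('q, 'g, 'a) vpa \<Rightarrow> ('g, 'q) conf set" where
  "Good A = {c. good (bot A) (fst c)}"

lemma reg_GoodRW:
  fixes A :: "('q::finite, 'g, 'a) vpa"
  shows "regular (rw ` Good A)"
proof -
  have eq: "rw ` Good A = {[Inr (q::'q)] | q. True} @@ {x. set x \<subseteq> {Inl g | g. g \<noteq> bot A}} @@ {[Inl (bot A)]}"
  proof (intro set_eqI iffI)
    fix x assume "x \<in> rw ` Good A"
    then obtain al q where x: "x = rw (al, q)" "good (bot A) al" by (auto simp: Good_def)
    then obtain gs where "al = bot A # gs" "bot A \<notin> set gs" by (cases al) (auto simp: good_def)
    then have "x = [Inr q] @ map Inl (rev gs) @ [Inl (bot A)]" "set (map Inl (rev gs)) \<subseteq> {Inl g | g. g \<noteq> bot A}"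
      using x by (auto simp: rw_def)
    then show "x \<in> {[Inr (q::'q)] | q. True} @@ {x. set x \<subseteq> {Inl g | g. g \<noteq> bot A}} @@ {[Inl (bot A)]}"
      unfolding lconc_def by blast
  next
    fix x assume "x \<in> {[Inr (q::'q)] | q. True} @@ {x. set x \<subseteq> {Inl g | g. g \<noteq> bot A}} @@ {[Inl (bot A)]}"
    then obtain q y where x: "x = [Inr q] @ y @ [Inl (bot A)]" "set y \<subseteq> {Inl g | g. g \<noteq> bot A}"
      unfolding lconc_def by blast
    then obtain gs where "y = map Inl gs" "bot A \<notin> set gs"
    proof -
      have "y = map Inl (map projl y)" using x(2) by (induct y) auto
      moreover have "bot A \<notin> set (map projl y)" using x(2) by auto
      ultimately show ?thesis using that by blast
    qed
    then have "x = rw (bot A # rev gs, q)" "good (bot A) (bot A # rev gs)"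
      using x by (auto simp: rw_def good_def)
    then show "x \<in> rw ` Good A" by (auto simp: Good_def)
  qed
  have f1: "finite {[Inr q] | q::'q. True}"
    using finite_imageI[of "UNIV :: 'q set" "\<lambda>q. [Inr q] :: ('g + 'q) list"] by (simp add: full_SetCompr_eq)
  show ?thesis unfolding eq
    by (intro reg_lconc reg_lists reg_finite f1) simp
qed

context
  fixes A :: "('q::finite, 'g, 'a) vpa"
  assumes wf: "wf_vpa A"
begin

lemma map_Inl_app_Inr:
  assumes "map Inl al @ v = map Inl ga @ [Inr q]"
  shows "\<exists>be. v = map Inl be @ [Inr q] \<and> ga = al @ be"
proof -
  have "length al \<le> length ga"
  proof (rule ccontr)
    assume "\<not> length al \<le> length ga"
    then have "(map Inl al @ v) ! length ga = Inl (al ! length ga)" by (simp add: nth_append)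
    moreover have "(map Inl ga @ [Inr q]) ! length ga = Inr q" by (metis length_map nth_append_length)
    ultimately show False using assms by simp
  qed
  note le = this
  have "take (length al) (map Inl al @ v) = take (length al) (map Inl ga @ [Inr q])" using assms by simp
  then have "map Inl al = map Inl (take (length al) ga)" using le by (simp add: take_map)
  then have t: "al = take (length al) ga" by (simp add: inj_map_eq_map[OF inj_Inl])
  have "drop (length al) (map Inl al @ v) = drop (length al) (map Inl ga @ [Inr q])" using assms by simp
  then have d: "v = map Inl (drop (length al) ga) @ [Inr q]" using le by (simp add: drop_map)
  show ?thesis using t d by (metis append_take_drop_id)
qed

lemma reg_Reach_cw: "regular (conf_word ` rConf A)"
proof -
  let ?L = "conf_word ` rConf A"
  define f where "f u = (u = [], u \<in> range (map Inl), {p. (map projl u, p) \<in> rConf A}, u \<in> ?L)" for u :: "('g + 'q) list"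
  have "finite (range f)" by (rule finite_subset[OF subset_UNIV]) simp
  then show ?thesis
  proof (rule reg_by_abs')
    fix u u' v assume fe: "f u = f u'" and uv: "u @ v \<in> ?L"
    then obtain ga q where c: "(ga, q) \<in> rConf A" "u @ v = map Inl ga @ [Inr q]"
      by (auto simp: conf_word_def)
    show "u' @ v \<in> ?L"
    proof (cases "u = []")
      case True then show ?thesis using fe uv by (simp add: f_def)
    next
      case un: False
      show ?thesis
      proof (cases "u \<in> range (map Inl)")
        case False
        have "v = []"
        proof (rule ccontr)
          assume "v \<noteq> []"
          then have "u = take (length u) (map Inl ga)" using c(2)
            by (metis append_eq_append_conv_if butlast_append butlast_snoc length_append_singleton length_map
                 less_Suc_eq_le take_all length_greater_0_conv not_less append.right_neutral  append_Nil2 le_refl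
                 add_diff_cancel_left' take_append  diff_is_0_eq' append_take_drop_id)
          then show False using False by (metis take_map rangeI)
        qed
        then show ?thesis using fe uv by (simp add: f_def)
      next
        case True
        then obtain al where u: "u = map Inl al" by auto
        from fe True obtain al' where u': "u' = map Inl al'" by (auto simp: f_def)
        have S: "{p. (al, p) \<in> rConf A} = {p. (al', p) \<in> rConf A}"
          using fe u u' by (simp add: f_def comp_def)
        have aln: "al \<noteq> []" "al' \<noteq> []" using un fe u u' by (auto simp: f_def)
        from map_Inl_app_Inr[OF c(2)[unfolded u]] obtain be where be: "v = map Inl be @ [Inr q]" "ga = al @ be" by blast
        have "(al' @ be, q) \<in> rConf A"
        proof (cases "be = []")
          case True
          then show ?thesis using c(1) be S by auto
        next
          case False
          have "(al @ be, q) \<in> rConf A" using c(1) be(2) by simp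
          from reach_decomp[OF wf aln(1) False this] obtain p a w where
            r: "(al, p) \<in> rConf A" "kind A a = KCall" "\<forall>j<length w. 1 + hgt A (take j w) > 0"
               "run A ([fst (dc A p a)], snd (dc A p a)) w = (be, q)" by auto
          have "(al', p) \<in> rConf A" using r(1) S by auto
          then show ?thesis using reach_extend[OF wf _ r(2-4)] by blast
        qed
        then show ?thesis using u' be by (auto simp: conf_word_def image_iff intro!: bexI[of _ "(al' @ be, q)"])
      qed
    qed
  qed
qed

lemma reg_Reach_rw: "regular (rw ` rConf A)"
proof -
  have "rw ` rConf A = rev ` (conf_word ` rConf A)" by (auto simp: rw_conf_word image_iff)
  then show ?thesis using reg_rev[OF reg_Reach_cw] by simp
qed

end

definition decg :: "'g \<Rightarrow> ('g + 'q) option \<Rightarrow> 'g" where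
  "decg b ov = (case ov of Some (Inl g) \<Rightarrow> g | _ \<Rightarrow> b)"

definition stq :: "('g + 'q) option \<Rightarrow> 'q" where
  "stq ov = (case ov of Some (Inr q) \<Rightarrow> q | _ \<Rightarrow> undefined)"

lemma decg_simps[simp]: "decg b None = b" "decg b (Some (Inl g)) = g"
  by (simp_all add: decg_def)

lemma stq_simp[simp]: "stq (Some (Inr q)) = q" by (simp add: stq_def)

lemma map_decg_Inl: "map (decg b) (map Some (map Inl xs)) = xs"
  by (induct xs) simp_all

lemma map_decg_Inl': "map (\<lambda>x. decg b (Some (Inl x))) xs = xs"
  by (induct xs) simp_all

lemma dec_conv1:
  fixes c1 c2 :: "('g, 'q) conf"
  shows "fst (hd (conv (rw c1) (rw c2))) = Some (Inr (snd c1))"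
    and "rev (map (\<lambda>r. decg b (fst r)) (tl (conv (rw c1) (rw c2)))) =
      replicate (length (fst c2) - length (fst c1)) b @ fst c1"
proof -
  have m: "map fst (conv (rw c1) (rw c2)) = map Some (rw c1) @ replicate (length (rw c2) - length (rw c1)) None"
    by (rule map_fst_conv)
  have ne: "conv (rw c1) (rw c2) \<noteq> []" by (simp add: rw_def)
  have "hd (map fst (conv (rw c1) (rw c2))) = Some (Inr (snd c1))" unfolding m by (simp add: rw_def)
  then show "fst (hd (conv (rw c1) (rw c2))) = Some (Inr (snd c1))" using ne by (simp add: hd_map)
  have "tl (map fst (conv (rw c1) (rw c2))) = map Some (map Inl (rev (fst c1))) @ replicate (length (fst c2) - length (fst c1)) None"
    unfolding m by (simp add: rw_def)
  then have "map (decg b) (tl (map fst (conv (rw c1) (rw c2)))) = rev (fst c1) @ replicate (length (fst c2) - length (fst c1)) b"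
    by (simp add: map_decg_Inl' comp_def)
  then show "rev (map (\<lambda>r. decg b (fst r)) (tl (conv (rw c1) (rw c2)))) =
      replicate (length (fst c2) - length (fst c1)) b @ fst c1"
    by (simp add: map_tl rev_map[symmetric] comp_def)
qed

lemma dec_conv2:
  fixes c1 c2 :: "('g, 'q) conf"
  shows "snd (hd (conv (rw c1) (rw c2))) = Some (Inr (snd c2))"
    and "rev (map (\<lambda>r. decg b (snd r)) (tl (conv (rw c1) (rw c2)))) =
      replicate (length (fst c1) - length (fst c2)) b @ fst c2"
proof -
  have sw: "conv (rw c1) (rw c2) = map prod.swap (conv (rw c2) (rw c1))" by (rule conv_swap)
  have ne: "conv (rw c2) (rw c1) \<noteq> []" by (simp add: rw_def)
  show "snd (hd (conv (rw c1) (rw c2))) = Some (Inr (snd c2))"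
    using dec_conv1(1)[of c2 c1] ne unfolding sw by (simp add: hd_map)
  show "rev (map (\<lambda>r. decg b (snd r)) (tl (conv (rw c1) (rw c2)))) =
      replicate (length (fst c1) - length (fst c2)) b @ fst c2"
    using dec_conv1(2)[of b c2 c1] unfolding sw by (simp add: map_tl comp_def)
qed

definition R_EQ :: "('q, 'g, 'a) vpa \<Rightarrow> (('g + 'q) list \<times> ('g + 'q) list) set" where
  "R_EQ A = {(rw c1, rw c2) | c1 c2. c1 \<in> Good A \<and> c2 \<in> Good A \<and> lang A c1 = lang A c2}"

lemma R_EQ_mem: "(rw c1, rw c2) \<in> R_EQ A \<longleftrightarrow> c1 \<in> Good A \<and> c2 \<in> Good A \<and> lang A c1 = lang A c2"
proof
  assume "(rw c1, rw c2) \<in> R_EQ A"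
  then obtain d1 d2 where "rw c1 = rw d1" "rw c2 = rw d2" "d1 \<in> Good A \<and> d2 \<in> Good A \<and> lang A d1 = lang A d2"
    unfolding R_EQ_def by blast
  then show "c1 \<in> Good A \<and> c2 \<in> Good A \<and> lang A c1 = lang A c2" by (metis rw_inj)
next
  assume "c1 \<in> Good A \<and> c2 \<in> Good A \<and> lang A c1 = lang A c2"
  then show "(rw c1, rw c2) \<in> R_EQ A" unfolding R_EQ_def by blast
qed

definition VG :: "('q, 'g, 'a) vpa \<Rightarrow> (('g + 'q) option \<times> ('g + 'q) option) list set" where
  "VG A = CV (rw ` Good A \<times> rw ` Good A)"

lemma reg_VG: "regular (VG (A :: ('q::finite, 'g, 'a) vpa))"
  unfolding VG_def by (intro reg_CV_prod reg_GoodRW)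

context
  fixes A :: "('q::finite, 'g, 'a) vpa"
  assumes wf: "wf_vpa A"
begin

definition T1 :: "(('g + 'q) option \<times> ('g + 'q) option) list \<Rightarrow> 'g list" where
  "T1 u = rev (map (\<lambda>r. decg (bot A) (fst r)) (tl u))"
definition T2 :: "(('g + 'q) option \<times> ('g + 'q) option) list \<Rightarrow> 'g list" where
  "T2 u = rev (map (\<lambda>r. decg (bot A) (snd r)) (tl u))"
definition Q1 :: "(('g + 'q) option \<times> ('g + 'q) option) list \<Rightarrow> 'q" where
  "Q1 u = stq (fst (hd u))"
definition Q2 :: "(('g + 'q) option \<times> ('g + 'q) option) list \<Rightarrow> 'q" where
  "Q2 u = stq (snd (hd u))"
definition B1 :: "(('g + 'q) option \<times> ('g + 'q) option) list \<Rightarrow> 'g list" where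
  "B1 v = rev (map (\<lambda>r. decg (bot A) (fst r)) v)"
definition B2 :: "(('g + 'q) option \<times> ('g + 'q) option) list \<Rightarrow> 'g list" where
  "B2 v = rev (map (\<lambda>r. decg (bot A) (snd r)) v)"

definition Nb where
  "Nb u = (\<forall>w. nohit A (length u - 1) w \<longrightarrow>
     (snd (run A ([bot A] @ T1 u, Q1 u) w) \<in> fin A \<longleftrightarrow> snd (run A ([bot A] @ T2 u, Q2 u) w) \<in> fin A))"

definition Ps where
  "Ps u = {(snd (run A ([bot A] @ T1 u, Q1 u) w), snd (run A ([bot A] @ T2 u, Q2 u) w)) | w. hit A (length u - 1) w}"

lemma EQchar:
  assumes "u \<noteq> []" "v \<noteq> []" "u @ v = conv (rw c1) (rw c2)" "c1 \<in> Good A" "c2 \<in> Good A"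
  shows "lang A c1 = lang A c2 \<longleftrightarrow> Nb u \<and> (\<forall>(p, p') \<in> Ps u. lang A (B1 v, p) = lang A (B2 v, p'))"
proof -
  have tl: "tl (u @ v) = tl u @ v" and hd: "hd (u @ v) = hd u" using assms(1) by simp_all
  have d1: "B1 v @ T1 u = replicate (length (fst c2) - length (fst c1)) (bot A) @ fst c1"
    using dec_conv1(2)[of "bot A" c1 c2] assms(3) tl by (simp add: B1_def T1_def)
  have d2: "B2 v @ T2 u = replicate (length (fst c1) - length (fst c2)) (bot A) @ fst c2"
    using dec_conv2(2)[of "bot A" c1 c2] assms(3) tl by (simp add: B2_def T2_def)
  have q1: "Q1 u = snd c1" using dec_conv1(1)[of c1 c2] assms(3) hd by (simp add: Q1_def)
  have q2: "Q2 u = snd c2" using dec_conv2(1)[of c1 c2] assms(3) hd by (simp add: Q2_def)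
  have g1: "good (bot A) (fst c1)" and g2: "good (bot A) (fst c2)" using assms(4,5) by (auto simp: Good_def)
  have l1: "lang A c1 = lang A (B1 v @ T1 u, Q1 u)"
    unfolding d1 q1 using lang_pre[of "fst c1" A] g1 by (simp add: good_def)
  have l2: "lang A c2 = lang A (B2 v @ T2 u, Q2 u)"
    unfolding d2 q2 using lang_pre[of "fst c2" A] g2 by (simp add: good_def)
  have pv1: "pv A (B1 v) (T1 u)" unfolding pv_def using d1 g1 assms(2) by (auto simp: B1_def)
  have pv2: "pv A (B2 v) (T2 u)" unfolding pv_def using d2 g2 assms(2) by (auto simp: B2_def)
  have len: "length (T1 u) = length u - 1" "length (T2 u) = length u - 1" by (simp_all add: T1_def T2_def)
  show ?thesis unfolding l1 l2 EQ_thm[OF wf pv1 pv2 len] Nb_def Ps_def by blast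
qed

definition LEQ where "LEQ = CV (R_EQ A)"

lemma LEQ_VG: "LEQ \<subseteq> VG A"
  by (auto simp: LEQ_def VG_def CV_def R_EQ_def)


lemma reg_LEQ: "regular LEQ"
proof -
  define f where "f u = (u = [], quot (VG A) u, u \<in> LEQ, Nb u, Ps u)" for u
  have "range f \<subseteq> UNIV \<times> range (quot (VG A)) \<times> UNIV \<times> UNIV \<times> UNIV" by (auto simp: f_def)
  moreover have "finite ((UNIV :: bool set) \<times> range (quot (VG A)) \<times> (UNIV :: bool set) \<times> (UNIV :: bool set) \<times> (UNIV :: ('q \<times> 'q) set set))"
    using reg_VG[of A] unfolding regular_def by (intro finite_cartesian_product finite_UNIV) simp_all
  ultimately have "finite (range f)" by (rule finite_subset)
  then show ?thesis
  proof (rule reg_by_abs')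
    fix u u' v assume fe: "f u = f u'" and uv: "u @ v \<in> LEQ"
    show "u' @ v \<in> LEQ"
    proof (cases "u = [] \<or> v = []")
      case True then show ?thesis using fe uv by (auto simp: f_def)
    next
      case False
      then have un: "u \<noteq> []" "v \<noteq> []" by auto
      then have un': "u' \<noteq> []" using fe by (simp add: f_def)
      obtain c1 c2 where c: "u @ v = conv (rw c1) (rw c2)" "c1 \<in> Good A" "c2 \<in> Good A" "lang A c1 = lang A c2"
        using uv by (auto simp: LEQ_def CV_def R_EQ_def)
      have "v \<in> quot (VG A) u" using uv LEQ_VG by (auto simp: quot_def)
      then have "v \<in> quot (VG A) u'" using fe by (simp add: f_def)
      then obtain c1' c2' where c': "u' @ v = conv (rw c1') (rw c2')" "c1' \<in> Good A" "c2' \<in> Good A"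
        by (auto simp: quot_def VG_def CV_def)
      have "Nb u \<and> (\<forall>(p, p') \<in> Ps u. lang A (B1 v, p) = lang A (B2 v, p'))"
        using EQchar[OF un c(1-3)] c(4) by simp
      then have "Nb u' \<and> (\<forall>(p, p') \<in> Ps u'. lang A (B1 v, p) = lang A (B2 v, p'))"
        using fe by (simp add: f_def)
      then have "lang A c1' = lang A c2'" using EQchar[OF un' un(2) c'] by simp
      then show ?thesis using c' by (simp add: LEQ_def R_EQ_mem)
    qed
  qed
qed

lemma reg_CV_EQ: "regular (CV (R_EQ A))"
  using reg_LEQ unfolding LEQ_def .

end

lemma lexp_bridge: "List.lexordp (<) xs ys = ord_class.lexordp (xs :: 'g::linorder list) ys"
  by (simp add: List.lexordp_def lexordp_conv_lexord)

lemma reg_last: "regular {x. x \<noteq> [] \<and> P (last x)}"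
proof (rule reg_by_abs[where f="\<lambda>u. u \<noteq> [] \<and> P (last u)"])
  fix u u' :: "'a list" assume fe: "(u \<noteq> [] \<and> P (last u)) = (u' \<noteq> [] \<and> P (last u'))"
  have e: "u @ v \<noteq> [] \<and> P (last (u @ v)) \<longleftrightarrow> (if v = [] then u \<noteq> [] \<and> P (last u) else P (last v))" for u v :: "'a list"
    by (auto simp: last_append)
  show "quot {x. x \<noteq> [] \<and> P (last x)} u = quot {x. x \<noteq> [] \<and> P (last x)} u'"
    unfolding quot_def using e[of u] e[of u'] fe by auto
qed simp

lemma conv_last_None:
  assumes "conv u v \<noteq> []"
  shows "fst (last (conv u v)) = None \<longleftrightarrow> length u < length v"
proof -
  have h: "fst (last (conv u v)) = last (map fst (conv u v))" using assms by (simp add: last_map)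
  have m: "map fst (conv u v) = map Some u @ replicate (length v - length u) None" by (rule map_fst_conv)
  show ?thesis
  proof (cases "length u < length v")
    case True
    then have "replicate (length v - length u) (None :: 'a option) \<noteq> []" by simp
    then have "last (map fst (conv u v)) = None" unfolding m by (simp add: last_append)
    then show ?thesis using h True by simp
  next
    case False
    then have "u \<noteq> []" using assms by (cases u; cases v) auto
    moreover have "map fst (conv u v) = map Some u" using m False by simp
    ultimately have "last (map fst (conv u v)) = Some (last u)" by (simp add: last_map)
    then show ?thesis using h False by simp
  qed
qed

lemma conv_SS_iff: "set (conv u v) \<subseteq> SSr \<longleftrightarrow> length u = length v"
  by (induct u v rule: conv.induct) (auto simp: SSr_def)

definition lexs :: "bool option \<Rightarrow> (('g::linorder + 'q::linorder) option \<times> ('g + 'q) option) \<Rightarrow> bool option" where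
  "lexs s r = (case (s, r) of
      (None, (Some (Inr q1), Some (Inr q2))) \<Rightarrow> Some (q1 < q2)
    | (Some b, (Some (Inl a1), Some (Inl a2))) \<Rightarrow> Some (if a1 < a2 then True else if a2 < a1 then False else b)
    | _ \<Rightarrow> None)"

lemma lexordp_snoc:
  fixes P Q :: "'g::linorder list"
  assumes "length P = length Q"
  shows "ord_class.lexordp (P @ [x]) (Q @ [y]) \<longleftrightarrow> ord_class.lexordp P Q \<or> (P = Q \<and> x < y)"
  using assms
proof (induct P Q rule: list_induct2)
  case Nil then show ?case by simp
next
  case (Cons a P b Q)
  then show ?case by (auto simp: not_less_iff_gr_or_eq)
qed

lemma lexs_fold:
  fixes xs ys :: "'g::linorder list"
  assumes "length xs = length ys"
  shows "foldl lexs (Some s) (conv (map Inl xs :: ('g + 'q::linorder) list) (map Inl ys)) = Some (ord_class.lexordp (rev xs) (rev ys) \<or> (xs = ys \<and> s))"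
  using assms
proof (induct xs ys arbitrary: s rule: list_induct2)
  case Nil then show ?case by simp
next
  case (Cons x xs y ys)
  have "foldl lexs (Some s) (conv (map Inl (x # xs) :: ('g + 'q) list) (map Inl (y # ys))) =
        foldl lexs (Some (if x < y then True else if y < x then False else s)) (conv (map Inl xs :: ('g + 'q) list) (map Inl ys))"
    by (simp add: lexs_def)
  also have "\<dots> = Some (ord_class.lexordp (rev xs) (rev ys) \<or> (xs = ys \<and> (if x < y then True else if y < x then False else s)))"
    by (rule Cons(2))
  also have "\<dots> = Some (ord_class.lexordp (rev (x # xs)) (rev (y # ys)) \<or> (x # xs = y # ys \<and> s))"
    using lexordp_snoc[of "rev xs" "rev ys" x y] Cons(1)
    by (auto simp: not_less_iff_gr_or_eq lexordp_irreflexive')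
  finally show ?case .
qed

definition R_LESS :: "('q::linorder, 'g::linorder, 'a) vpa \<Rightarrow> (('g + 'q) list \<times> ('g + 'q) list) set" where
  "R_LESS A = {(rw c1, rw c2) | c1 c2. c1 \<in> Good A \<and> c2 \<in> Good A \<and> conf_less c1 c2}"

lemma R_LESS_mem: "(rw c1, rw c2) \<in> R_LESS A \<longleftrightarrow> c1 \<in> Good A \<and> c2 \<in> Good A \<and> conf_less c1 c2"
proof
  assume "(rw c1, rw c2) \<in> R_LESS A"
  then obtain d1 d2 where "rw c1 = rw d1" "rw c2 = rw d2" "d1 \<in> Good A \<and> d2 \<in> Good A \<and> conf_less d1 d2"
    unfolding R_LESS_def by blast
  then show "c1 \<in> Good A \<and> c2 \<in> Good A \<and> conf_less c1 c2" by (metis rw_inj)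
next
  assume "c1 \<in> Good A \<and> c2 \<in> Good A \<and> conf_less c1 c2"
  then show "(rw c1, rw c2) \<in> R_LESS A" unfolding R_LESS_def by blast
qed

lemma reg_LESS:
  fixes A :: "('q::{finite,linorder}, 'g::linorder, 'a) vpa"
  shows "regular (CV (R_LESS A))"
proof -
  have eq: "CV (R_LESS A) = VG A \<inter> ({x. x \<noteq> [] \<and> fst (last x) = None} \<union> ({x. set x \<subseteq> SSr} \<inter> {x. foldl lexs None x \<in> {Some True}}))"
  proof (intro set_eqI iffI)
    fix x assume "x \<in> CV (R_LESS A)"
    then obtain c1 c2 where c: "x = conv (rw c1) (rw c2)" "c1 \<in> Good A" "c2 \<in> Good A" "conf_less c1 c2"
      by (auto simp: CV_def R_LESS_def)
    obtain al1 q1 al2 q2 where cc: "c1 = (al1, q1)" "c2 = (al2, q2)" by fastforce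
    have ne: "x \<noteq> []" using c by (simp add: rw_def)
    have "x \<in> VG A" using c by (simp add: VG_def)
    moreover have "x \<in> {x. x \<noteq> [] \<and> fst (last x) = None} \<union> ({x. set x \<subseteq> SSr} \<inter> {x. foldl lexs None x \<in> {Some True}})"
    proof (cases "length al1 < length al2")
      case True
      then show ?thesis using conv_last_None[of "rw c1" "rw c2"] ne c(1) cc by (simp add: rw_def)
    next
      case False
      then have len: "length al1 = length al2" using c(4) cc by (simp add: conf_less_def lexp_bridge)
      then have ss: "set x \<subseteq> SSr" unfolding c(1) conv_SS_iff using cc by (simp add: rw_def)
      have "foldl lexs None x = Some (ord_class.lexordp (rev (rev al1)) (rev (rev al2)) \<or> (rev al1 = rev al2 \<and> q1 < q2))"
        using c(1) cc lexs_fold[of "rev al1" "rev al2" "q1 < q2"] len by (simp add: rw_def lexs_def)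
      then show ?thesis using ss c(4) cc len by (simp add: conf_less_def lexp_bridge)
    qed
    ultimately show "x \<in> VG A \<inter> ({x. x \<noteq> [] \<and> fst (last x) = None} \<union> ({x. set x \<subseteq> SSr} \<inter> {x. foldl lexs None x \<in> {Some True}}))"
      by blast
  next
    fix x assume x: "x \<in> VG A \<inter> ({x. x \<noteq> [] \<and> fst (last x) = None} \<union> ({x. set x \<subseteq> SSr} \<inter> {x. foldl lexs None x \<in> {Some True}}))"
    then obtain c1 c2 where c: "x = conv (rw c1) (rw c2)" "c1 \<in> Good A" "c2 \<in> Good A"
      by (auto simp: VG_def CV_def)
    obtain al1 q1 al2 q2 where cc: "c1 = (al1, q1)" "c2 = (al2, q2)" by fastforce
    have ne: "x \<noteq> []" using c by (simp add: rw_def)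
    have "conf_less c1 c2"
    proof (cases "fst (last x) = None")
      case True
      then have "length al1 < length al2" using conv_last_None[of "rw c1" "rw c2"] ne c(1) cc by (simp add: rw_def)
      then show ?thesis using cc by (simp add: conf_less_def lexp_bridge)
    next
      case False
      then have ss: "set x \<subseteq> SSr" and fo: "foldl lexs None x = Some True" using x by auto
      have len: "length al1 = length al2" using ss unfolding c(1) conv_SS_iff using cc by (simp add: rw_def)
      have "foldl lexs None x = Some (ord_class.lexordp (rev (rev al1)) (rev (rev al2)) \<or> (rev al1 = rev al2 \<and> q1 < q2))"
        using c(1) cc lexs_fold[of "rev al1" "rev al2" "q1 < q2"] len by (simp add: rw_def lexs_def)
      then show ?thesis using fo cc len by (simp add: conf_less_def lexp_bridge)
    qed
    then show "x \<in> CV (R_LESS A)" using c by (simp add: R_LESS_mem)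
  qed
  show ?thesis unfolding eq
    by (intro reg_Int reg_Un reg_VG reg_last reg_lists reg_dfa)
qed

lemma cl_irrefl: "\<not> conf_less c (c :: ('g::linorder, 'q::linorder) conf)"
  by (auto simp: conf_less_def lexp_bridge lexordp_irreflexive')

lemma cl_trans: "conf_less a b \<Longrightarrow> conf_less b c \<Longrightarrow> conf_less a (c :: ('g::linorder, 'q::linorder) conf)"
  by (auto simp: conf_less_def lexp_bridge intro: lexordp_trans)

lemma cl_linear: "a \<noteq> b \<Longrightarrow> conf_less a b \<or> conf_less b (a :: ('g::linorder, 'q::linorder) conf)"
  using lexordp_linear[of "fst a" "fst b"]
  by (cases a; cases b) (auto simp: conf_less_def lexp_bridge neq_iff)

lemma finite_min_cl:
  assumes "finite S" "S \<noteq> {}"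
  shows "\<exists>m\<in>S. \<forall>c\<in>S. c = m \<or> conf_less m (c :: ('g::linorder, 'q::linorder) conf)"
  using assms
proof (induct S rule: finite_ne_induct)
  case (singleton x) then show ?case by simp
next
  case (insert x S)
  then obtain m where m: "m \<in> S" "\<forall>c\<in>S. c = m \<or> conf_less m c" by blast
  show ?case
  proof (cases "conf_less x m")
    case True
    then show ?thesis using m by (auto intro: cl_trans)
  next
    case False
    then have "x = m \<or> conf_less m x" using cl_linear[of x m] by auto
    then show ?thesis using m by auto
  qed
qed

lemma ex_min_cl:
  assumes "E \<noteq> {}"
  shows "\<exists>m\<in>E. \<forall>c\<in>E. c = m \<or> conf_less m (c :: ('g::{finite,linorder}, 'q::{finite,linorder}) conf)"
proof -
  have ex: "\<exists>n. \<exists>c\<in>E. length (fst c) = n" using assms by auto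
  define n where "n = (LEAST n. \<exists>c\<in>E. length (fst c) = n)"
  have n: "\<exists>c\<in>E. length (fst c) = n" unfolding n_def by (rule LeastI_ex[OF ex])
  have nmin: "\<And>c. c \<in> E \<Longrightarrow> n \<le> length (fst c)" unfolding n_def by (auto intro: Least_le)
  define En where "En = {c\<in>E. length (fst c) = n}"
  have "En \<subseteq> {xs. set xs \<subseteq> UNIV \<and> length xs = n} \<times> UNIV" by (auto simp: En_def)
  moreover have "finite ({xs :: 'g list. set xs \<subseteq> UNIV \<and> length xs = n} \<times> (UNIV :: 'q set))"
    by (intro finite_cartesian_product finite_lists_length_eq) simp_all
  ultimately have fin: "finite En" by (rule finite_subset)
  have "En \<noteq> {}" using n by (auto simp: En_def)
  from finite_min_cl[OF fin this] obtain m where m: "m \<in> En" "\<forall>c\<in>En. c = m \<or> conf_less m c" by blast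
  have "\<forall>c\<in>E. c = m \<or> conf_less m c"
  proof
    fix c assume c: "c \<in> E"
    show "c = m \<or> conf_less m c"
    proof (cases "length (fst c) = n")
      case True
      then have "c \<in> En" using c by (simp add: En_def)
      then show ?thesis using m(2) by blast
    next
      case False
      then have "length (fst m) < length (fst c)" using nmin[OF c] m(1) by (auto simp: En_def)
      then show ?thesis by (simp add: conf_less_def)
    qed
  qed
  then show ?thesis using m(1) by (auto simp: En_def)
qed

definition Pr :: "('q::linorder, 'g::linorder, 'a) vpa \<Rightarrow> ('g, 'q) conf \<Rightarrow> ('g, 'q) conf \<Rightarrow> bool" where
  "Pr A c c' \<longleftrightarrow> c' \<in> rConf A \<and> lang A c' = lang A c \<and>
                 (\<forall>c''\<in>rConf A. lang A c'' = lang A c \<longrightarrow> c'' = c' \<or> conf_less c' c'')"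

lemma rep_Pr: "rep A c = (THE c'. Pr A c c')"
  by (simp add: rep_def Pr_def)

lemma Pr_unique: "Pr A c c1 \<Longrightarrow> Pr A c c2 \<Longrightarrow> c1 = c2"
  unfolding Pr_def by (metis cl_irrefl cl_trans)

lemma rep_P:
  fixes A :: "('q::{finite,linorder}, 'g::{finite,linorder}, 'a) vpa"
  assumes "\<exists>c'\<in>rConf A. lang A c' = lang A c"
  shows "Pr A c (rep A c)"
proof -
  have "{c'\<in>rConf A. lang A c' = lang A c} \<noteq> {}" using assms by auto
  from ex_min_cl[OF this] obtain m where m: "m \<in> rConf A" "lang A m = lang A c"
    "\<forall>c''\<in>{c'\<in>rConf A. lang A c' = lang A c}. c'' = m \<or> conf_less m c''" by blast
  have "Pr A c m" using m unfolding Pr_def by auto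
  then have "\<exists>!c'. Pr A c c'" using Pr_unique by blast
  then show ?thesis unfolding rep_Pr by (rule theI')
qed

lemma rep_K:
  assumes "\<not> (\<exists>c'\<in>rConf A. lang A c' = lang A c)"
  shows "rep A c = The (\<lambda>_. False)"
proof -
  have "(\<lambda>c'. Pr A c c') = (\<lambda>_. False)" using assms by (auto simp: Pr_def fun_eq_iff)
  then show ?thesis unfolding rep_Pr by simp
qed

context
  fixes A :: "('q::{finite,linorder}, 'g::{finite,linorder}, 'a) vpa"
  assumes wf: "wf_vpa A"
begin

definition "RReach = rw ` rConf A"
definition "Bad = (R_EQ A \<inter> (UNIV \<times> RReach)) - Id - R_LESS A"
definition "MinW = RReach - fst ` Bad"
definition "G1 = R_EQ A \<inter> (UNIV \<times> MinW)"
definition "UnW = rw ` Good A - fst ` (R_EQ A \<inter> (UNIV \<times> RReach))"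
definition "G2 = UnW \<times> {rw (The (\<lambda>_. False))}"

lemma rConf_Good: "c \<in> rConf A \<Longrightarrow> c \<in> Good A"
  using rConf_good[OF wf] by (simp add: Good_def)

lemma reg_Grev: "regular (CV (G1 \<union> G2))"
proof -
  have eq: "regular (CV (R_EQ A))" by (rule reg_CV_EQ[OF wf])
  have rr: "regular RReach" unfolding RReach_def by (rule reg_Reach_rw[OF wf])
  have "regular (CV Bad)" unfolding Bad_def
    by (intro reg_CV_Diff reg_CV_Int eq reg_CV_prod reg_UNIV rr reg_CV_Id reg_LESS)
  then have mw: "regular MinW" unfolding MinW_def by (intro reg_Diff rr reg_CV_fst)
  have g1: "regular (CV G1)" unfolding G1_def by (intro reg_CV_Int eq reg_CV_prod reg_UNIV mw)
  have "regular UnW" unfolding UnW_def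
    by (intro reg_Diff reg_GoodRW reg_CV_fst reg_CV_Int eq reg_CV_prod reg_UNIV rr)
  then have g2: "regular (CV G2)" unfolding G2_def by (intro reg_CV_prod reg_singleton)
  show ?thesis by (intro reg_CV_Un g1 g2)
qed

lemma RReach_mem: "rw c \<in> RReach \<longleftrightarrow> c \<in> rConf A"
  by (auto simp: RReach_def dest: rw_inj)

lemma MinW_mem: "rw c \<in> MinW \<longleftrightarrow> c \<in> rConf A \<and> (\<forall>c''\<in>rConf A. lang A c'' = lang A c \<longrightarrow> c'' = c \<or> conf_less c c'')"
proof
  assume a: "rw c \<in> MinW"
  then have r: "c \<in> rConf A" by (simp add: MinW_def RReach_mem)
  have "c'' = c \<or> conf_less c c''" if c'': "c'' \<in> rConf A" "lang A c'' = lang A c" for c''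
  proof (rule ccontr)
    assume "\<not> (c'' = c \<or> conf_less c c'')"
    then have "(rw c, rw c'') \<in> Bad" using c'' r rConf_Good
      by (auto simp: Bad_def R_EQ_mem RReach_mem R_LESS_mem dest: rw_inj)
    then show False using a by (force simp: MinW_def)
  qed
  then show "c \<in> rConf A \<and> (\<forall>c''\<in>rConf A. lang A c'' = lang A c \<longrightarrow> c'' = c \<or> conf_less c c'')" using r by blast
next
  assume a: "c \<in> rConf A \<and> (\<forall>c''\<in>rConf A. lang A c'' = lang A c \<longrightarrow> c'' = c \<or> conf_less c c'')"
  have "rw c \<notin> fst ` Bad"
  proof
    assume "rw c \<in> fst ` Bad"
    then obtain y where "(rw c, y) \<in> Bad" by force
    then obtain c2 where y: "y = rw c2" "c2 \<in> rConf A" "(rw c, rw c2) \<in> R_EQ A" "rw c \<noteq> rw c2" "(rw c, rw c2) \<notin> R_LESS A"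
      by (auto simp: Bad_def RReach_def)
    then have "lang A c2 = lang A c" "c2 \<noteq> c" "\<not> conf_less c c2"
      using rConf_Good a by (auto simp: R_EQ_mem R_LESS_mem)
    then show False using a y(2) by blast
  qed
  then show "rw c \<in> MinW" using a by (simp add: MinW_def RReach_mem)
qed

lemma Grev_eq: "G1 \<union> G2 = {(rw c, rw (rep A c)) | c. c \<in> Good A}"
proof (intro set_eqI iffI)
  fix p assume "p \<in> G1 \<union> G2"
  then show "p \<in> {(rw c, rw (rep A c)) | c. c \<in> Good A}"
  proof
    assume "p \<in> G1"
    then have p1: "p \<in> R_EQ A" "snd p \<in> MinW" by (auto simp: G1_def)
    then obtain c c' where p0: "p = (rw c, rw c')" unfolding R_EQ_def by blast
    then have p: "p = (rw c, rw c')" "(rw c, rw c') \<in> R_EQ A" "rw c' \<in> MinW" using p1 by auto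
    then have c: "c \<in> Good A" "lang A c = lang A c'" "c' \<in> rConf A"
      "\<forall>c''\<in>rConf A. lang A c'' = lang A c' \<longrightarrow> c'' = c' \<or> conf_less c' c''"
      by (auto simp: R_EQ_mem MinW_mem)
    then have "Pr A c c'" by (simp add: Pr_def)
    moreover have "Pr A c (rep A c)" using rep_P c by blast
    ultimately have "rep A c = c'" using Pr_unique by blast
    then have "p = (rw c, rw (rep A c))" using p by simp
    then show ?thesis using c(1) by blast
  next
    assume "p \<in> G2"
    then obtain c where p: "p = (rw c, rw (The (\<lambda>_. False)))" "c \<in> Good A"
      "rw c \<notin> fst ` (R_EQ A \<inter> (UNIV \<times> RReach))"
      by (auto simp: G2_def UnW_def)
    have "\<not> (\<exists>c'\<in>rConf A. lang A c' = lang A c)"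
    proof
      assume "\<exists>c'\<in>rConf A. lang A c' = lang A c"
      then obtain c' where "c' \<in> rConf A" "lang A c' = lang A c" by blast
      then have "(rw c, rw c') \<in> R_EQ A \<inter> (UNIV \<times> RReach)"
        using p(2) rConf_Good by (auto simp: R_EQ_mem RReach_mem)
      then show False using p(3) by force
    qed
    then have "rep A c = The (\<lambda>_. False)" by (rule rep_K)
    then have "p = (rw c, rw (rep A c))" using p by simp
    then show ?thesis using p(2) by blast
  qed
next
  fix p assume "p \<in> {(rw c, rw (rep A c)) | c. c \<in> Good A}"
  then obtain c where p: "p = (rw c, rw (rep A c))" "c \<in> Good A" by blast
  show "p \<in> G1 \<union> G2"
  proof (cases "\<exists>c'\<in>rConf A. lang A c' = lang A c")
    case True
    then have P: "Pr A c (rep A c)" by (rule rep_P)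
    then have "rw (rep A c) \<in> MinW" by (simp add: Pr_def MinW_mem)
    moreover have "(rw c, rw (rep A c)) \<in> R_EQ A" using P p(2) rConf_Good by (simp add: Pr_def R_EQ_mem)
    ultimately show ?thesis using p by (simp add: G1_def)
  next
    case False
    then have "rep A c = The (\<lambda>_. False)" by (rule rep_K)
    moreover have "rw c \<notin> fst ` (R_EQ A \<inter> (UNIV \<times> RReach))"
    proof
      assume "rw c \<in> fst ` (R_EQ A \<inter> (UNIV \<times> RReach))"
      then obtain y where "(rw c, y) \<in> R_EQ A" "y \<in> RReach" by force
      then obtain c' where "y = rw c'" "c' \<in> rConf A" by (auto simp: RReach_def)
      then have "lang A c' = lang A c" using \<open>(rw c, y) \<in> R_EQ A\<close> by (simp add: R_EQ_mem)
      then show False using False \<open>c' \<in> rConf A\<close> by blast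
    qed
    ultimately show ?thesis using p by (simp add: G2_def UnW_def)
  qed
qed

lemma reg_rep_rel: "regular (CV {(rw c, rw (rep A c)) | c. c \<in> Good A})"
  using reg_Grev Grev_eq by simp

end

instance flat :: (finite, finite) finite
proof
  have eq: "(UNIV :: ('a::finite, 'b::finite) flat set) = range FC \<union> range FQ \<union> range FT"
  proof (rule set_eqI)
    fix x :: "('a, 'b) flat" show "x \<in> UNIV \<longleftrightarrow> x \<in> range FC \<union> range FQ \<union> range FT"
      by (cases x) auto
  qed
  show "finite (UNIV :: ('a::finite, 'b::finite) flat set)" by (subst eq) (intro finite_UnI finite_imageI finite_UNIV)
qed

type_synonym ('a, 'g, 'q) row2 = "('a, 'q) flat option \<times> ('g + 'q) option"

definition brow :: "('q, 'g, 'a) vpa \<Rightarrow> 'q \<Rightarrow> ('a, 'q) flat list \<Rightarrow> ('a, 'g, 'q) row2 list" where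
  "brow A p s = (case s of [FC a] \<Rightarrow> [(Some (FC a), Some (Inl (fst (dc A p a))))] | _ \<Rightarrow> map (\<lambda>x. (Some x, None)) s)"

primrec ab :: "('q, 'g, 'a) vpa \<Rightarrow> 'q \<Rightarrow> ('a, 'q) flat list list \<Rightarrow> ('a, 'g, 'q) row2 list" where
  "ab A p [] = [(None, Some (Inr p))]"
| "ab A p (s # ss) = brow A p s @ ab A (snd (block_step A ([], p) s)) ss"

lemma brow_FT_eq: "brow A p (FT \<tau> # map FQ qs) = (Some (FT \<tau>), None) # map (\<lambda>q. (Some (FQ q), None)) qs"
  by (simp add: brow_def)

lemma ab_FC: "kind A a = KCall \<Longrightarrow> ab A p ([FC a] # ss) = (Some (FC a), Some (Inl (fst (dc A p a)))) # ab A (snd (dc A p a)) ss"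
  by (simp add: brow_def)

lemma ab_FT: "ab A p ((FT \<tau> # map FQ qs) # ss) = (Some (FT \<tau>), None) # map (\<lambda>q. (Some (FQ q), None)) qs @ ab A (\<tau> p) ss"
  by (simp add: brow_def)

definition align :: "('q, 'g, 'a) vpa \<Rightarrow> 'q list \<Rightarrow> ('a, 'q) flat list list \<Rightarrow> ('a, 'g, 'q) row2 list" where
  "align A qs ss = (None, Some (Inl (bot A))) # map (\<lambda>q. (Some (FQ q), None)) qs @ ab A (snd (tf_init A qs)) ss"

lemma is_block_cases:
  assumes "is_block A s"
  obtains a where "kind A a = KCall" "s = [FC a]" | \<tau> qs where "s = FT \<tau> # map FQ qs"
  using assms by (auto simp: is_block_def)

lemma ab_fst:
  fixes A :: "('q, 'g, 'a) vpa"
  assumes "\<forall>s\<in>set ss. is_block A s"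
  shows "sm (map fst (ab A p ss)) = concat ss"
  using assms
proof (induct ss arbitrary: p)
  case Nil then show ?case by simp
next
  case (Cons s ss)
  from Cons(2) have "is_block A s" by simp
  then show ?case
  proof (cases rule: is_block_cases)
    case (1 a) then show ?thesis using Cons by (simp add: brow_def)
  next
    case (2 \<tau> qs)
    have "sm (map fst (map (\<lambda>q. (Some (FQ q), None :: ('g + 'q) option)) qs)) = map FQ qs"
      by (induct qs) simp_all
    then show ?thesis using Cons 2 by (simp add: brow_FT_eq)
  qed
qed

lemma ab_snd:
  fixes A :: "('q, 'g, 'a) vpa"
  assumes "\<forall>s\<in>set ss. is_block A s"
  shows "map Inl (fst c) @ sm (map snd (ab A (snd c) ss)) = conf_word (foldl (block_step A) c ss)"
  using assms
proof (induct ss arbitrary: c)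
  case Nil then show ?case by (simp add: conf_word_def)
next
  case (Cons s ss)
  from Cons(2) have "is_block A s" by simp
  then show ?case
  proof (cases rule: is_block_cases)
    case (1 a)
    have "map Inl (fst c) @ sm (map snd (ab A (snd c) (s # ss))) =
          map Inl (fst (block_step A c s)) @ sm (map snd (ab A (snd (block_step A c s)) ss))"
      using 1 by (cases c) (simp add: brow_def)
    then show ?thesis using Cons 1 by simp
  next
    case (2 \<tau> qs)
    have e1: "ab A (snd c) (s # ss) = brow A (snd c) s @ ab A (\<tau> (snd c)) ss" using 2 by simp
    have e2: "sm (map snd (brow A (snd c) s)) = []" unfolding 2 brow_FT_eq by (induct qs) simp_all
    have e3: "block_step A c s = (fst c, \<tau> (snd c))" using 2 by (cases c) simp
    show ?thesis using Cons(1)[of "(fst c, \<tau> (snd c))"] Cons(2) e1 e2 e3 by simp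
  qed
qed

lemma tf_init_fst: "fst (tf_init A qs) = [bot A]"
  by (simp add: tf_init_def init_conf_def split: list.splits)

lemma align_hw:
  fixes A :: "('q, 'g, 'a) vpa"
  assumes "\<forall>s\<in>set ss. is_block A s"
  shows "sm (map fst (align A qs ss)) = map FQ qs @ concat ss"
    and "sm (map snd (align A qs ss)) = conf_word (foldl (block_step A) (tf_init A qs) ss)"
proof -
  have e: "sm (map fst (map (\<lambda>q. (Some (FQ q), None :: ('g + 'q) option)) qs)) = map FQ qs"
          "sm (map snd (map (\<lambda>q. (Some (FQ q :: ('a, 'q) flat), None :: ('g + 'q) option)) qs)) = []"
    by (induct qs) simp_all
  show "sm (map fst (align A qs ss)) = map FQ qs @ concat ss"
    using e ab_fst[OF assms] by (simp add: align_def)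
  show "sm (map snd (align A qs ss)) = conf_word (foldl (block_step A) (tf_init A qs) ss)"
    using e ab_snd[OF assms, of "tf_init A qs"] by (simp add: align_def tf_init_fst)
qed

lemma ab_rows: "r \<in> set (ab A p ss) \<Longrightarrow> r \<noteq> (None, None)"
  by (induct ss arbitrary: p) (auto simp: brow_def split: list.splits flat.splits)

lemma align_rows: "r \<in> set (align A qs ss) \<Longrightarrow> r \<noteq> (None, None)"
  by (auto simp: align_def dest: ab_rows)

datatype 'q dst = DInit | DS0 "'q option" | DB 'q | DT 'q | DAcc | DSink

instance dst :: (finite) finite
proof
  have eq: "(UNIV :: ('a::finite) dst set) = {DInit, DAcc, DSink} \<union> range DS0 \<union> range DB \<union> range DT"
  proof (rule set_eqI)
    fix x :: "'a dst" show "x \<in> UNIV \<longleftrightarrow> x \<in> {DInit, DAcc, DSink} \<union> range DS0 \<union> range DB \<union> range DT"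
      by (cases x) auto
  qed
  show "finite (UNIV :: ('a::finite) dst set)" by (subst eq) (intro finite_UnI finite_imageI finite_UNIV finite.insertI finite.emptyI)
qed

definition dblk :: "('q, 'g, 'a) vpa \<Rightarrow> 'q \<Rightarrow> ('a, 'g, 'q) row2 \<Rightarrow> 'q dst" where
  "dblk A p r = (case r of
      (Some (FC a), Some (Inl g)) \<Rightarrow> if kind A a = KCall \<and> g = fst (dc A p a) then DB (snd (dc A p a)) else DSink
    | (Some (FT \<tau>), None) \<Rightarrow> DT (\<tau> p)
    | (None, Some (Inr q)) \<Rightarrow> if q = p then DAcc else DSink
    | _ \<Rightarrow> DSink)"

fun isFQ :: "('a, 'g, 'q) row2 \<Rightarrow> bool" where
  "isFQ (Some (FQ q), None) = True" | "isFQ _ = False"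

fun fqof :: "('a, 'g, 'q) row2 \<Rightarrow> 'q" where
  "fqof (Some (FQ q), None) = q" | "fqof _ = undefined"

fun dstep :: "('q, 'g, 'a) vpa \<Rightarrow> 'q dst \<Rightarrow> ('a, 'g, 'q) row2 \<Rightarrow> 'q dst" where
  "dstep A DInit r = (if r = (None, Some (Inl (bot A))) then DS0 None else DSink)"
| "dstep A (DS0 o1) r = (if isFQ r then DS0 (case o1 of None \<Rightarrow> Some (fqof r) | Some q \<Rightarrow> Some q)
                         else dblk A (case o1 of None \<Rightarrow> q0 A | Some q \<Rightarrow> q) r)"
| "dstep A (DB p) r = dblk A p r"
| "dstep A (DT p) r = (if isFQ r then DT p else dblk A p r)"
| "dstep A DAcc r = DSink"
| "dstep A DSink r = DSink"

lemma fold_sink: "foldl (dstep A) DSink x = DSink"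
  by (induct x) simp_all

lemma fold_acc: "foldl (dstep A) DAcc x = DAcc \<Longrightarrow> x = []"
  by (cases x) (simp_all add: fold_sink)

definition okst :: "('q, 'g, 'a) vpa \<Rightarrow> 'q dst \<Rightarrow> 'q \<Rightarrow> bool" where
  "okst A s p \<longleftrightarrow> s = DB p \<or> s = DT p \<or> (\<exists>o1. s = DS0 o1 \<and> p = (case o1 of None \<Rightarrow> q0 A | Some q \<Rightarrow> q))"

lemma okst_step: "okst A s p \<Longrightarrow> \<not> isFQ r \<Longrightarrow> dstep A s r = dblk A p r"
  by (auto simp: okst_def)

lemma fold_FQ_T: "foldl (dstep A) (DT p) (map (\<lambda>q. (Some (FQ q), None)) qs) = DT p"
  by (induct qs) simp_all

lemma ab_acc:
  assumes "\<forall>s\<in>set ss. is_block A s" "okst A s p"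
  shows "foldl (dstep A) s (ab A p ss) = DAcc"
  using assms
proof (induct ss arbitrary: s p)
  case Nil then show ?case by (simp add: okst_step dblk_def)
next
  case (Cons b ss)
  from Cons(2) have "is_block A b" by simp
  then show ?case
  proof (cases rule: is_block_cases)
    case (1 a)
    have "dstep A s (Some (FC a), Some (Inl (fst (dc A p a)))) = DB (snd (dc A p a))"
      using okst_step[OF Cons(3)] 1 by (simp add: dblk_def)
    moreover have "okst A (DB (snd (dc A p a))) (snd (dc A p a))" by (simp add: okst_def)
    ultimately show ?thesis using Cons 1 by (simp add: brow_def)
  next
    case (2 \<tau> qs)
    have "dstep A s (Some (FT \<tau>), None) = DT (\<tau> p)"
      using okst_step[OF Cons(3)] by (simp add: dblk_def)
    moreover have "okst A (DT (\<tau> p)) (\<tau> p)" by (simp add: okst_def)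
    ultimately show ?thesis using Cons 2 fold_FQ_T[of A "\<tau> p" qs] by (simp add: brow_FT_eq)
  qed
qed

lemma fold_FQ_S0: "foldl (dstep A) (DS0 None) (map (\<lambda>q. (Some (FQ q), None)) qs) =
   DS0 (case qs of [] \<Rightarrow> None | q # _ \<Rightarrow> Some q)"
proof -
  have "foldl (dstep A) (DS0 (Some q)) (map (\<lambda>q. (Some (FQ q), None)) qs) = DS0 (Some q)" for q
    by (induct qs) simp_all
  then show ?thesis by (cases qs) simp_all
qed

lemma align_acc:
  assumes "\<forall>s\<in>set ss. is_block A s"
  shows "foldl (dstep A) DInit (align A qs ss) = DAcc"
proof -
  have "okst A (DS0 (case qs of [] \<Rightarrow> None | q # _ \<Rightarrow> Some q)) (snd (tf_init A qs))"
    by (auto simp: okst_def tf_init_def init_conf_def split: list.splits)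
  then show ?thesis using ab_acc[OF assms] fold_FQ_S0[of A qs] by (simp add: align_def)
qed

lemma dblk_cases:
  assumes "dblk A p r = s" "s \<noteq> DSink"
  shows "(\<exists>a. kind A a = KCall \<and> r = (Some (FC a), Some (Inl (fst (dc A p a)))) \<and> s = DB (snd (dc A p a)))
       \<or> (\<exists>\<tau>. r = (Some (FT \<tau>), None) \<and> s = DT (\<tau> p))
       \<or> (r = (None, Some (Inr p)) \<and> s = DAcc)"
  using assms
  by (cases r) (auto simp: dblk_def split: option.splits flat.splits sum.splits if_splits)

lemma isFQ_D: "isFQ r \<Longrightarrow> \<exists>q. r = (Some (FQ q), None)"
  by (cases r rule: isFQ.cases) auto

lemma inv_BT:
  "(\<forall>p. foldl (dstep A) (DB p) x = DAcc \<longrightarrow> (\<exists>ss. (\<forall>s\<in>set ss. is_block A s) \<and> x = ab A p ss)) \<and>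
   (\<forall>p. foldl (dstep A) (DT p) x = DAcc \<longrightarrow> (\<exists>qs ss. (\<forall>s\<in>set ss. is_block A s) \<and> x = map (\<lambda>q. (Some (FQ q), None)) qs @ ab A p ss))"
proof (induct x)
  case Nil then show ?case by simp
next
  case (Cons r x)
  have B: "\<exists>ss. (\<forall>s\<in>set ss. is_block A s) \<and> r # x = ab A p ss" if a: "foldl (dstep A) (dblk A p r) x = DAcc" for p
  proof -
    have ns: "dblk A p r \<noteq> DSink"
    proof
      assume "dblk A p r = DSink"
      then have "foldl (dstep A) (dblk A p r) x = DSink" by (simp add: fold_sink)
      then show False using a by simp
    qed
    from dblk_cases[OF refl ns] show ?thesis
    proof (elim disjE exE conjE)
      fix a assume c: "kind A a = KCall" "r = (Some (FC a), Some (Inl (fst (dc A p a))))" "dblk A p r = DB (snd (dc A p a))"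
      then obtain ss where "\<forall>s\<in>set ss. is_block A s" "x = ab A (snd (dc A p a)) ss" using Cons a by auto
      then show ?thesis using c by (intro exI[of _ "[FC a] # ss"]) (auto simp: is_block_def brow_def)
    next
      fix \<tau> assume c: "r = (Some (FT \<tau>), None)" "dblk A p r = DT (\<tau> p)"
      then obtain qs ss where "\<forall>s\<in>set ss. is_block A s" "x = map (\<lambda>q. (Some (FQ q), None)) qs @ ab A (\<tau> p) ss"
        using Cons a by auto
      then show ?thesis using c by (intro exI[of _ "(FT \<tau> # map FQ qs) # ss"]) (auto simp: is_block_def brow_FT_eq)
    next
      assume c: "r = (None, Some (Inr p))" "dblk A p r = DAcc"
      then have "x = []" using a fold_acc by fastforce
      then show ?thesis using c by (intro exI[of _ "[]"]) simp
    qed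
  qed
  have 1: "\<forall>p. foldl (dstep A) (DB p) (r # x) = DAcc \<longrightarrow> (\<exists>ss. (\<forall>s\<in>set ss. is_block A s) \<and> r # x = ab A p ss)"
    using B by simp
  have 2: "\<forall>p. foldl (dstep A) (DT p) (r # x) = DAcc \<longrightarrow> (\<exists>qs ss. (\<forall>s\<in>set ss. is_block A s) \<and> r # x = map (\<lambda>q. (Some (FQ q), None)) qs @ ab A p ss)"
  proof (intro allI impI)
    fix p assume a: "foldl (dstep A) (DT p) (r # x) = DAcc"
    show "\<exists>qs ss. (\<forall>s\<in>set ss. is_block A s) \<and> r # x = map (\<lambda>q. (Some (FQ q), None)) qs @ ab A p ss"
    proof (cases "isFQ r")
      case True
      then obtain q where r: "r = (Some (FQ q), None)" using isFQ_D by blast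
      then have "foldl (dstep A) (DT p) x = DAcc" using a by simp
      then obtain qs ss where "\<forall>s\<in>set ss. is_block A s" "x = map (\<lambda>q. (Some (FQ q), None)) qs @ ab A p ss"
        using Cons by blast
      then show ?thesis using r by (intro exI[of _ "q # qs"] exI[of _ ss]) simp
    next
      case False
      then have "foldl (dstep A) (dblk A p r) x = DAcc" using a by simp
      then obtain ss where "\<forall>s\<in>set ss. is_block A s" "r # x = ab A p ss" using B by blast
      then show ?thesis by (intro exI[of _ "[]"] exI[of _ ss]) simp
    qed
  qed
  show ?case using 1 2 by blast
qed

lemma inv_S0:
  "foldl (dstep A) (DS0 o1) x = DAcc \<Longrightarrow> \<exists>qs ss. (\<forall>s\<in>set ss. is_block A s) \<and>
     x = map (\<lambda>q. (Some (FQ q), None)) qs @ ab A (case o1 of Some q \<Rightarrow> q | None \<Rightarrow> (case qs of [] \<Rightarrow> q0 A | q # _ \<Rightarrow> q)) ss"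
proof (induct x arbitrary: o1)
  case Nil then show ?case by simp
next
  case (Cons r x)
  show ?case
  proof (cases "isFQ r")
    case True
    then obtain q where r: "r = (Some (FQ q), None)" using isFQ_D by blast
    define o2 where "o2 = (case o1 of None \<Rightarrow> Some q | Some q' \<Rightarrow> Some q')"
    have "foldl (dstep A) (DS0 o2) x = DAcc" using Cons(2) unfolding r o2_def by (cases o1) simp_all
    from Cons(1)[OF this] obtain qs ss where q: "\<forall>s\<in>set ss. is_block A s"
      "x = map (\<lambda>q. (Some (FQ q), None)) qs @ ab A (case o2 of Some q \<Rightarrow> q | None \<Rightarrow> (case qs of [] \<Rightarrow> q0 A | q # _ \<Rightarrow> q)) ss"
      by blast
    then show ?thesis using r
      by (intro exI[of _ "q # qs"] exI[of _ ss]) (auto simp: o2_def split: option.splits)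
  next
    case False
    define p where "p = (case o1 of None \<Rightarrow> q0 A | Some q \<Rightarrow> q)"
    have "foldl (dstep A) (DB p) (r # x) = DAcc" using Cons(2) False by (simp add: p_def)
    from conjunct1[OF inv_BT, rule_format, OF this] obtain ss where "\<forall>s\<in>set ss. is_block A s" "r # x = ab A p ss"
      by blast
    then show ?thesis by (intro exI[of _ "[]"] exI[of _ ss]) (simp add: p_def split: option.splits)
  qed
qed

definition AlignL :: "('q, 'g, 'a) vpa \<Rightarrow> ('a, 'g, 'q) row2 list set" where
  "AlignL A = {align A qs ss | qs ss. \<forall>s\<in>set ss. is_block A s}"

lemma AlignL_dfa: "AlignL A = {x. foldl (dstep A) DInit x \<in> {DAcc}}"
proof (intro set_eqI iffI)
  fix x assume "x \<in> AlignL A"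
  then show "x \<in> {x. foldl (dstep A) DInit x \<in> {DAcc}}" using align_acc by (auto simp: AlignL_def)
next
  fix x assume a: "x \<in> {x. foldl (dstep A) DInit x \<in> {DAcc}}"
  then obtain r x' where x: "x = r # x'" by (cases x) auto
  have r: "r = (None, Some (Inl (bot A)))"
  proof (rule ccontr)
    assume "r \<noteq> (None, Some (Inl (bot A)))"
    then have "foldl (dstep A) DInit x = DSink" using x by (simp add: fold_sink)
    then show False using a by simp
  qed
  then have "foldl (dstep A) (DS0 None) x' = DAcc" using a x by simp
  from inv_S0[OF this] obtain qs ss where q: "\<forall>s\<in>set ss. is_block A s"
    "x' = map (\<lambda>q. (Some (FQ q), None)) qs @ ab A (case qs of [] \<Rightarrow> q0 A | q # _ \<Rightarrow> q) ss" by auto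
  have "snd (tf_init A qs) = (case qs of [] \<Rightarrow> q0 A | q # _ \<Rightarrow> q)"
    by (simp add: tf_init_def init_conf_def split: list.splits)
  then have "x = align A qs ss" using x r q by (simp add: align_def)
  then show "x \<in> AlignL A" using q(1) by (auto simp: AlignL_def)
qed

lemma reg_AlignL: "regular (AlignL (A :: ('q::finite, 'g, 'a) vpa))"
  unfolding AlignL_dfa by (rule reg_dfa)

definition h2 :: "('a, 'g, 'q) row2 \<Rightarrow> ('a, 'q) flat list \<times> ('g + 'q) list" where
  "h2 r = (o2l (fst r), o2l (snd r))"

lemma hw_h2: "hw h2 x = (sm (map fst x), sm (map snd x))"
  by (simp add: hw_def h2_def sm_def comp_def)

lemma tf_rel_eq: "tf_rel A = hw h2 ` AlignL A"
proof (intro set_eqI iffI)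
  fix p assume "p \<in> tf_rel A"
  then obtain qs ss where p: "p = (map FQ qs @ concat ss, conf_word (foldl (block_step A) (tf_init A qs) ss))"
    "\<forall>s\<in>set ss. is_block A s" by (auto simp: tf_rel_def tf_graph_def)
  then have "p = hw h2 (align A qs ss)" by (simp add: hw_h2 align_hw)
  then show "p \<in> hw h2 ` AlignL A" using p(2) by (auto simp: AlignL_def)
next
  fix p assume "p \<in> hw h2 ` AlignL A"
  then obtain qs ss where p: "p = hw h2 (align A qs ss)" "\<forall>s\<in>set ss. is_block A s" by (auto simp: AlignL_def)
  then have "p = (map FQ qs @ concat ss, conf_word (foldl (block_step A) (tf_init A qs) ss))"
    by (simp add: hw_h2 align_hw)
  then show "p \<in> tf_rel A" using p(2) unfolding tf_rel_def tf_graph_def by blast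
qed

lemma rational_tf:
  fixes A :: "('q::finite, 'g::finite, 'a::finite) vpa"
  shows "rational (tf_rel A)"
  unfolding tf_rel_eq by (rule regular_rational[OF reg_AlignL, of UNIV]) auto

type_synonym ('a, 'g, 'q) row3 = "('a, 'q) flat option \<times> (('g + 'q) option \<times> ('g + 'q) option)"

definition e12 :: "('a, 'g, 'q) row3 \<Rightarrow> ('a, 'g, 'q) row2 list" where
  "e12 r = (if fst r = None \<and> fst (snd r) = None then [] else [(fst r, fst (snd r))])"

definition e23 :: "('a, 'g, 'q) row3 \<Rightarrow> (('g + 'q) option \<times> ('g + 'q) option) list" where
  "e23 r = (if fst (snd r) = None \<and> snd (snd r) = None then [] else [snd r])"

definition h3 :: "('a, 'g, 'q) row3 \<Rightarrow> ('a, 'q) flat list \<times> ('g + 'q) list" where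
  "h3 r = (o2l (fst r), o2l (snd (snd r)))"

lemma hw_h3: "hw h3 x = (sm (map fst x), sm (map (\<lambda>r. snd (snd r)) x))"
  by (simp add: hw_def h3_def sm_def comp_def)

lemma e12_fst: "sm (map fst (concat (map e12 x))) = sm (map fst x)"
  by (induct x) (auto simp: e12_def sm_def)

lemma e12_snd: "sm (map snd (concat (map e12 x))) = sm (map (\<lambda>r. fst (snd r)) x)"
  by (induct x) (auto simp: e12_def sm_def)

lemma e23_fst: "sm (map fst (concat (map e23 x))) = sm (map (\<lambda>r. fst (snd r)) x)"
  by (induct x) (auto simp: e23_def sm_def)

lemma e23_snd: "sm (map snd (concat (map e23 x))) = sm (map (\<lambda>r. snd (snd r)) x)"
  by (induct x) (auto simp: e23_def sm_def)

fun merge :: "('a, 'g, 'q) row2 list \<Rightarrow> (('g + 'q) option \<times> ('g + 'q) option) list \<Rightarrow> ('a, 'g, 'q) row3 list" where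
  "merge a ((None, g') # y) = (None, None, g') # merge a y"
| "merge ((f, None) # a) y = (f, None, None) # merge a y"
| "merge ((f, Some g) # a) ((Some g0, g') # y) = (f, Some g, g') # merge a y"
| "merge a y = []"

lemma merge_props:
  "(\<forall>r\<in>set a. r \<noteq> (None, None)) \<Longrightarrow> (\<forall>r\<in>set y. r \<noteq> (None, None)) \<Longrightarrow> sm (map snd a) = sm (map fst y) \<Longrightarrow>
   concat (map e12 (merge a y)) = a \<and> concat (map e23 (merge a y)) = y
   \<and> sm (map fst (merge a y)) = sm (map fst a) \<and> sm (map (\<lambda>r. snd (snd r)) (merge a y)) = sm (map snd y)"
  by (induct a y rule: merge.induct) (auto simp: e12_def e23_def sm_def)

lemma conv_rows: "r \<in> set (conv u v) \<Longrightarrow> r \<noteq> (None, None)"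
  by (induct u v rule: conv.induct) auto

lemma rev_o2l: "rev (o2l a) = o2l a"
  by (cases a) simp_all

lemma sm_rev: "sm (rev xs) = rev (sm xs)"
  by (induct xs) (simp_all add: sm_def rev_o2l)

context
  fixes A :: "('q::{finite,linorder}, 'g::{finite,linorder}, 'a::finite) vpa"
  assumes wf: "wf_vpa A"
begin

lemma tf_good:
  assumes "\<forall>s\<in>set ss. is_block A s" "good (bot A) (fst c)"
  shows "good (bot A) (fst (foldl (block_step A) c ss))"
  using assms
proof (induct ss arbitrary: c)
  case Nil then show ?case by simp
next
  case (Cons s ss)
  from Cons(2) have "is_block A s" by simp
  then have "good (bot A) (fst (block_step A c s))"
  proof (cases rule: is_block_cases)
    case (1 a)
    then show ?thesis using good_step[OF wf Cons(3), of "snd c" a] by (cases c) simp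
  next
    case (2 \<tau> qs)
    then show ?thesis using Cons(3) by (cases c) simp
  qed
  then show ?case using Cons by simp
qed

definition "RG = {(rw c, rw (rep A c)) | c. c \<in> Good A}"
definition "La = {x. concat (map e12 x) \<in> AlignL A}"
definition "Lb = {x. concat (map e23 x) \<in> rev ` CV RG}"

lemma reg_L3: "regular (La \<inter> Lb)"
proof -
  have "regular (CV RG)" unfolding RG_def by (rule reg_rep_rel[OF wf])
  then show ?thesis unfolding La_def Lb_def
    by (intro reg_Int reg_hom_pre reg_AlignL reg_rev)
qed

lemma nuf_eq: "nuf_rel A = hw h3 ` (La \<inter> Lb)"
proof (intro set_eqI iffI)
  fix p assume "p \<in> nuf_rel A"
  then obtain qs ss where p: "p = (map FQ qs @ concat ss, conf_word (rep A (foldl (block_step A) (tf_init A qs) ss)))"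
    "\<forall>s\<in>set ss. is_block A s" by (auto simp: nuf_rel_def tf_graph_def)
  define c where "c = foldl (block_step A) (tf_init A qs) ss"
  have cg: "c \<in> Good A" unfolding c_def Good_def using tf_good[OF p(2)] by (simp add: tf_init_fst good_def)
  define a where "a = align A qs ss"
  define y where "y = rev (conv (rw c) (rw (rep A c)))"
  have ya: "sm (map snd a) = sm (map fst y)"
    using align_hw(2)[OF p(2), of qs] by (simp add: a_def y_def c_def rev_map[symmetric] sm_rev rw_conf_word)
  have mp: "concat (map e12 (merge a y)) = a \<and> concat (map e23 (merge a y)) = y
   \<and> sm (map fst (merge a y)) = sm (map fst a) \<and> sm (map (\<lambda>r. snd (snd r)) (merge a y)) = sm (map snd y)"
  proof -
    have r1: "\<forall>r\<in>set a. r \<noteq> (None, None)" unfolding a_def by (blast dest: align_rows)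
    have r2: "\<forall>r\<in>set y. r \<noteq> (None, None)" unfolding y_def set_rev by (blast dest: conv_rows)
    show ?thesis by (rule merge_props[OF r1 r2 ya])
  qed
  have "merge a y \<in> La" using mp p(2) by (auto simp: La_def AlignL_def a_def)
  moreover have "merge a y \<in> Lb"
  proof -
    have "(rw c, rw (rep A c)) \<in> RG" using cg unfolding RG_def by blast
    then have "conv (rw c) (rw (rep A c)) \<in> CV RG" by simp
    then have "y \<in> rev ` CV RG" unfolding y_def by (rule imageI)
    then show ?thesis using mp by (simp add: Lb_def)
  qed
  moreover have "hw h3 (merge a y) = p"
    using mp align_hw(1)[OF p(2), of qs] p(1)
    by (simp add: hw_h3 a_def y_def c_def rev_map[symmetric] sm_rev rw_conf_word)
  ultimately show "p \<in> hw h3 ` (La \<inter> Lb)" by blast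
next
  fix p assume "p \<in> hw h3 ` (La \<inter> Lb)"
  then obtain x where x: "p = hw h3 x" "x \<in> La" "x \<in> Lb" by blast
  then obtain qs ss where a: "concat (map e12 x) = align A qs ss" "\<forall>s\<in>set ss. is_block A s"
    by (auto simp: La_def AlignL_def)
  from x obtain c where c: "concat (map e23 x) = rev (conv (rw c) (rw (rep A c)))" "c \<in> Good A"
    by (auto simp: Lb_def RG_def CV_def)
  have 1: "sm (map fst x) = map FQ qs @ concat ss"
    using e12_fst[of x] a align_hw(1)[OF a(2)] by simp
  have "sm (map (\<lambda>r. fst (snd r)) x) = conf_word (foldl (block_step A) (tf_init A qs) ss)"
    using e12_snd[of x] a align_hw(2)[OF a(2)] by simp
  moreover have "sm (map (\<lambda>r. fst (snd r)) x) = conf_word c"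
    using e23_fst[of x] c by (simp add: rev_map[symmetric] sm_rev rw_conf_word)
  ultimately have cc: "c = foldl (block_step A) (tf_init A qs) ss" using conf_word_inj by metis
  have 3: "sm (map (\<lambda>r. snd (snd r)) x) = conf_word (rep A c)"
    using e23_snd[of x] c by (simp add: rev_map[symmetric] sm_rev rw_conf_word)
  have "p = (map FQ qs @ concat ss, conf_word (rep A (foldl (block_step A) (tf_init A qs) ss)))"
    using x(1) 1 3 cc by (simp add: hw_h3)
  then show "p \<in> nuf_rel A" using a(2) unfolding nuf_rel_def tf_graph_def by blast
qed

lemma rational_nuf: "rational (nuf_rel A)"
  unfolding nuf_eq by (rule regular_rational[OF reg_L3, of UNIV]) auto

end

theorem lemma8:
  fixes A :: "('q::{finite,linorder}, 'g::{finite,linorder}, 'a::finite) vpa"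
  assumes "wf_vpa A"
  shows "rational (tf_rel A) \<and> rational (nuf_rel A)"
  using rational_tf rational_nuf[OF assms] by blast

end
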